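(* Let $\Omega\subset\mathbb{R}^d$ be a bounded domain, $p\ge1$ an integer, and $T$ an invertible real $d\times d$ matrix. If $\Omega$ admits $p$-frames, then $$F_p(s^2(T))=\frac{I_{2p}(T(\Omega))}{I_{2p}(\Omega)}\cdot\frac{V(\Omega)^{1+4p/d}}{V(T^{-1}(\Omega))^{2p/d}\,V(T(\Omega))^{1+2p/d}}.$$ Furthermore, if $\Omega$ has irreducible isometry group, then $$\frac{1}{d^p}\|T\|_{HS}^{2p}\le\frac{I_{2p}(T(\Omega))}{I_{2p}(\Omega)}\cdot\frac{V(\Omega)^{1+4p/d}}{V(T^{-1}(\Omega))^{2p/d}\,V(T(\Omega))^{1+2p/d}}\le\frac1d\|T\|_{2p}^{2p}.$$
   Context: $G_\Omega=\{U\in O(d):U(\Omega)=\Omega\}$. $\Omega$ admits $p$-frames if every $G_\Omega$-invariant homogeneous polynomial of degree $2p$ on $\mathbb{R}^d$ is a scalar multiple of $|x|^{2p}$; it has irreducible isometry group if the only $G_\Omega$-invariant subspaces are $\{0\}$ and $\mathbb{R}^d$. $V(D)$ is volume and $I_{2p}(D)=\int_D|x|^{2p}dx$. $s^2(T)$ is the multiset of eigenvalues of $T^\dagger T$, $F_p(s^2(T))=\int_{S^{d-1}}|T\theta|^{2p}d\sigma(\theta)$ with $\sigma$ normalized uniform measure on the sphere. $\|T\|_n=(\sum s_i^n)^{1/n}$ is the Schatten norm, $\|T\|_{HS}=\|T\|_2$. *)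

theory Defs
  imports "HOL-Analysis.Analysis"
begin

text \<open>Dimension d = CARD('n); vectors are real^'n, matrices real^'n^'n.\<close>

definition isometry_group :: "(real^'n) set \<Rightarrow> (real^'n^'n) set" where
  "isometry_group \<Omega> = {U. orthogonal_matrix U \<and> (\<lambda>x. U *v x) ` \<Omega> = \<Omega>}"

definition homogeneous_poly :: "nat \<Rightarrow> (real^'n \<Rightarrow> real) \<Rightarrow> bool" where
  "homogeneous_poly k f \<longleftrightarrow>
     (\<exists>c :: ('n \<Rightarrow> nat) \<Rightarrow> real. \<forall>x.
        f x = (\<Sum>\<alpha>\<in>{\<alpha>. sum \<alpha> UNIV = k}. c \<alpha> * (\<Prod>i\<in>UNIV. (x $ i) ^ \<alpha> i)))"

definition admits_p_frames :: "nat \<Rightarrow> (real^'n) set \<Rightarrow> bool" where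
  "admits_p_frames p \<Omega> \<longleftrightarrow>
     (\<forall>f. homogeneous_poly (2*p) f \<and> (\<forall>U\<in>isometry_group \<Omega>. \<forall>x. f (U *v x) = f x)
          \<longrightarrow> (\<exists>c::real. \<forall>x. f x = c * norm x ^ (2*p)))"

definition irreducible_isometry_group :: "(real^'n) set \<Rightarrow> bool" where
  "irreducible_isometry_group \<Omega> \<longleftrightarrow>
     (\<forall>W. subspace W \<and> (\<forall>U\<in>isometry_group \<Omega>. (\<lambda>x. U *v x) ` W \<subseteq> W)
          \<longrightarrow> W = {0} \<or> W = UNIV)"

definition vol :: "(real^'n) set \<Rightarrow> real" where
  "vol D = measure lebesgue D"

definition I_moment :: "nat \<Rightarrow> (real^'n) set \<Rightarrow> real" where
  "I_moment k D = integral D (\<lambda>x. norm x ^ k)"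

text \<open>Normalized uniform measure sigma on the unit sphere: the push-forward of the
  uniform probability measure on the unit ball under radial projection x |-> x/|x|
  (the cone-measure construction of normalized surface measure).\<close>
definition sphere_measure :: "(real^'n) measure" where
  "sphere_measure = distr (uniform_measure lborel (ball 0 1)) borel (\<lambda>x. x /\<^sub>R norm x)"

text \<open>F_p(s^2(T)) = integral over S^(d-1) of |T theta|^(2p) d sigma(theta).\<close>
definition F_p :: "nat \<Rightarrow> real^'n^'n \<Rightarrow> real" where
  "F_p p T = (\<integral>\<theta>. norm (T *v \<theta>) ^ (2*p) \<partial>sphere_measure)"

definition sq_singular_values :: "real^'n^'n \<Rightarrow> ('n \<Rightarrow> real)" where
  "sq_singular_values T = (SOME ev. \<exists>U. orthogonal_matrix U \<and>
      transpose U ** (transpose T ** T) ** U = (\<chi> i j. if i = j then ev i else 0))"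

definition singular_values :: "real^'n^'n \<Rightarrow> ('n \<Rightarrow> real)" where
  "singular_values T = (\<lambda>i. sqrt (sq_singular_values T i))"

definition schatten :: "nat \<Rightarrow> real^'n^'n \<Rightarrow> real" where
  "schatten n T = (\<Sum>i\<in>UNIV. singular_values T i ^ n) powr (1 / real n)"

definition hs_norm :: "real^'n^'n \<Rightarrow> real" where
  "hs_norm T = schatten 2 T"

end

theory Submission
  imports Defs "HOL-Probability.Probability_Measure"
begin

typedef 'a wo = "UNIV :: 'a set" morphisms rep_wo abs_wo by auto

definition enc :: "'a::finite \<Rightarrow> nat" where "enc = (SOME f. inj f)"

lemma inj_enc: "inj (enc :: 'a::finite \<Rightarrow> nat)"
proof -
  obtain f :: "'a \<Rightarrow> nat" and n where "inj_on f UNIV"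
    using finite_imp_inj_to_nat_seg[of "UNIV::'a set"] by auto
  then show ?thesis unfolding enc_def by (metis someI_ex)
qed

instantiation wo :: (finite) linorder
begin
definition less_eq_wo :: "'a wo \<Rightarrow> 'a wo \<Rightarrow> bool" where "less_eq_wo x y = (enc (rep_wo x) \<le> enc (rep_wo y))"
definition less_wo :: "'a wo \<Rightarrow> 'a wo \<Rightarrow> bool" where "less_wo x y = (enc (rep_wo x) < enc (rep_wo y))"
instance
proof
  fix x y :: "'a wo"
  show "x \<le> y \<Longrightarrow> y \<le> x \<Longrightarrow> x = y"
    unfolding less_eq_wo_def using inj_enc rep_wo_inject
    by (metis antisym injD)
qed (auto simp: less_eq_wo_def less_wo_def)
end

instance wo :: (finite) finite
proof
  have "UNIV = range (abs_wo :: 'a \<Rightarrow> 'a wo)"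
    by (metis abs_wo_cases surj_def)
  then show "finite (UNIV :: 'a wo set)" by (metis finite finite_imageI)
qed

instance wo :: (finite) wellorder
proof
  fix P :: "'a wo \<Rightarrow> bool" and a
  assume H: "\<And>x. (\<And>y. y < x \<Longrightarrow> P y) \<Longrightarrow> P x"
  show "P a"
    by (induct a rule: measure_induct_rule[of "\<lambda>x. enc (rep_wo x)"]) (auto intro: H simp: less_wo_def)
qed

definition tow :: "real^'n \<Rightarrow> real^('n wo)" where "tow v = (\<chi> i. v $ rep_wo i)"
definition fromw :: "real^('n wo) \<Rightarrow> real^'n" where "fromw w = (\<chi> j. w $ abs_wo j)"

lemma rep_abs[simp]: "rep_wo (abs_wo x) = x" by (simp add: abs_wo_inverse)
lemma abs_rep[simp]: "abs_wo (rep_wo x) = x" by (simp add: rep_wo_inverse)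

lemma tow_fromw[simp]: "tow (fromw w) = w" by (simp add: tow_def fromw_def rep_wo_inverse vec_eq_iff)
lemma fromw_tow[simp]: "fromw (tow v) = v" by (simp add: tow_def fromw_def abs_wo_inverse vec_eq_iff)

lemma linear_tow: "linear tow"
  by (auto simp: linear_iff tow_def vec_eq_iff)
lemma linear_fromw: "linear fromw"
  by (auto simp: linear_iff fromw_def vec_eq_iff)

lemma tow_meas[measurable]: "tow \<in> borel_measurable borel"
  by (intro borel_measurable_continuous_onI linear_continuous_on linear_conv_bounded_linear[THEN iffD1] linear_tow)
lemma fromw_meas[measurable]: "fromw \<in> borel_measurable borel"
  by (intro borel_measurable_continuous_onI linear_continuous_on linear_conv_bounded_linear[THEN iffD1] linear_fromw)

lemma prod_Basis_cart: "(\<Prod>b\<in>Basis. (x::real^'n) \<bullet> b) = (\<Prod>i\<in>UNIV. x $ i)"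
  by (simp add: Basis_vec_def cart_eq_inner_axis axis_eq_axis prod.UNION_disjoint)

lemma lborel_tow: "lborel = distr lborel borel (tow :: real^'n \<Rightarrow> real^('n wo))"
proof (rule lborel_eqI)
  fix l u :: "real^('n wo)"
  assume le: "\<And>b. b \<in> Basis \<Longrightarrow> l \<bullet> b \<le> u \<bullet> b"
  have le': "\<And>b. b \<in> Basis \<Longrightarrow> fromw l \<bullet> b \<le> fromw u \<bullet> b"
  proof -
    have li: "l $ i \<le> u $ i" for i using le[of "axis i 1"] by (auto simp: Basis_vec_def inner_axis)
    fix b :: "real^'n" assume "b \<in> Basis"
    then obtain j where "b = axis j 1" by (auto simp: Basis_vec_def)
    then show "fromw l \<bullet> b \<le> fromw u \<bullet> b" using li by (simp add: inner_axis fromw_def)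
  qed
  have pre: "tow -` box l u = box (fromw l) (fromw u)"
  proof (rule set_eqI)
    fix v :: "real^'n"
    have "(\<forall>i. l $ i < v $ rep_wo i \<and> v $ rep_wo i < u $ i) \<longleftrightarrow> (\<forall>j. l $ abs_wo j < v $ j \<and> v $ j < u $ abs_wo j)"
      by (metis rep_abs abs_rep)
    then show "v \<in> tow -` box l u \<longleftrightarrow> v \<in> box (fromw l) (fromw u)"
      by (simp add: mem_box_cart tow_def fromw_def)
  qed
  have "emeasure (distr lborel borel tow) (box l u) = emeasure lborel (tow -` box l u)"
    by (subst emeasure_distr) auto
  also have "\<dots> = (\<Prod>b\<in>Basis. (fromw u - fromw l) \<bullet> b)"
    unfolding pre using le' by simp
  also have "(\<Prod>b\<in>Basis. (fromw u - fromw l) \<bullet> b) = (\<Prod>b\<in>Basis. (u - l) \<bullet> b)"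
    unfolding prod_Basis_cart
    apply (rule prod.reindex_bij_witness[where i=rep_wo and j=abs_wo])
    by (auto simp: fromw_def abs_wo_inverse rep_wo_inverse)
  finally show "emeasure (distr lborel borel tow) (box l u) = (\<Prod>b\<in>Basis. (u - l) \<bullet> b)" .
qed simp

lemma lborel_fromw: "lborel = distr lborel borel (fromw :: real^('n wo) \<Rightarrow> real^'n)"
proof -
  have "distr lborel borel (fromw :: real^('n wo) \<Rightarrow> real^'n) = distr (distr lborel borel tow) borel fromw"
    using lborel_tow by metis
  also have "\<dots> = distr lborel borel (\<lambda>x. fromw (tow x))"
    by (subst distr_distr) (auto simp: comp_def)
  also have "\<dots> = lborel" by (simp add: distr_id2)
  finally show ?thesis by simp
qed


lemma cont_bound:
  fixes f :: "'a::euclidean_space \<Rightarrow> 'b::real_normed_vector"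
  assumes f: "continuous_on UNIV f" and A: "bounded A"
  obtains C where "\<And>x. x \<in> A \<Longrightarrow> norm (f x) \<le> C"
proof -
  obtain r where "0 < r" "A \<subseteq> ball 0 r" using bounded_subset_ballD[OF A(1), of 0] by blast
  then have r: "A \<subseteq> cball 0 r" by auto
  have "compact (f ` cball 0 r)"
    by (rule compact_continuous_image) (use f continuous_on_subset in auto)
  then obtain B where B: "\<And>y. y \<in> f ` cball 0 r \<Longrightarrow> norm y \<le> B"
    using compact_imp_bounded bounded_iff by metis
  show ?thesis using B r that by blast
qed

lemma bm_set_integrable:
  fixes f :: "'a::euclidean_space \<Rightarrow> 'b::euclidean_space"
  assumes fb[measurable]: "f \<in> borel_measurable borel" and C: "\<And>x. x \<in> A \<Longrightarrow> norm (f x) \<le> C"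
    and A: "bounded A" "A \<in> sets borel"
  shows "set_integrable lborel A f"
proof -
  obtain r where "0 < r" "A \<subseteq> ball 0 r" using bounded_subset_ballD[OF A(1), of 0] by blast
  then have r: "A \<subseteq> cball 0 r" by auto
  have "emeasure lborel A \<le> emeasure lborel (cball (0::'a) r)"
    using r A by (intro emeasure_mono) auto
  then have fin: "emeasure lborel A < \<infinity>"
    using emeasure_lborel_cball_finite[of "0::'a" r] by (simp add: order_le_less_trans)
  show ?thesis
    unfolding set_integrable_def
    by (rule integrableI_bounded_set_indicator[where B=C]) (use A fin C in auto)
qed

lemma bm_abs_integrable:
  fixes f :: "'a::euclidean_space \<Rightarrow> 'b::euclidean_space"
  assumes fb[measurable]: "f \<in> borel_measurable borel" and C: "\<And>x. x \<in> A \<Longrightarrow> norm (f x) \<le> C"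
    and A: "bounded A" "A \<in> sets borel"
  shows "f absolutely_integrable_on A"
proof -
  have "integrable lborel (\<lambda>x. indicator A x *\<^sub>R f x)"
    using bm_set_integrable[OF assms] by (simp add: set_integrable_def)
  then show ?thesis
    unfolding set_integrable_def
    by (subst integrable_completion) (use A in auto)
qed

lemma bm_integrable_on:
  fixes f :: "'a::euclidean_space \<Rightarrow> 'b::euclidean_space"
  assumes fb[measurable]: "f \<in> borel_measurable borel" and C: "\<And>x. x \<in> A \<Longrightarrow> norm (f x) \<le> C"
    and A: "bounded A" "A \<in> sets borel"
  shows "f integrable_on A"
  using set_borel_integral_eq_integral(1)[OF bm_set_integrable[OF assms]] by simp

lemma bm_integral_eq:
  fixes f :: "'a::euclidean_space \<Rightarrow> 'b::euclidean_space"
  assumes fb[measurable]: "f \<in> borel_measurable borel" and C: "\<And>x. x \<in> A \<Longrightarrow> norm (f x) \<le> C"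
    and A: "bounded A" "A \<in> sets borel"
  shows "integral A f = (LINT x:A|lborel. f x)"
  using set_borel_integral_eq_integral(2)[OF bm_set_integrable[OF assms]] by simp

lemma transfer_integral:
  fixes \<psi> :: "'a::euclidean_space \<Rightarrow> 'b::euclidean_space"
  assumes L: "lborel = distr lborel borel \<psi>" and [measurable]: "\<psi> \<in> borel_measurable borel"
    and inv1: "\<And>x. \<phi> (\<psi> x) = x" and inv2: "\<And>y. \<psi> (\<phi> y) = y"
    and fb[measurable]: "(f :: 'b \<Rightarrow> real) \<in> borel_measurable borel" and C: "\<And>x. x \<in> B \<Longrightarrow> norm (f x) \<le> C"
    and B: "bounded B" "B \<in> sets borel"
  shows "integral B f = integral (\<phi> ` B) (\<lambda>x. f (\<psi> x))"
proof -
  have ind: "indicator B (\<psi> x) = (indicator (\<phi> ` B) x :: real)" for x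
    by (metis image_eqI indicator_simps(1) indicator_simps(2) inv1 inv2 imageE)
  have [measurable]: "B \<in> sets borel" using B by simp
  have int: "integrable lborel (\<lambda>y. indicator B y *\<^sub>R f y)"
    using bm_set_integrable[OF fb C B] by (simp add: set_integrable_def)
  have int2: "integrable lborel (\<lambda>x. indicator (\<phi> ` B) x *\<^sub>R f (\<psi> x))"
  proof -
    have "integrable (distr lborel borel \<psi>) (\<lambda>y. indicator B y *\<^sub>R f y)"
      using int L by simp
    then have "integrable lborel (\<lambda>x. indicator B (\<psi> x) *\<^sub>R f (\<psi> x))"
      by (subst (asm) integrable_distr_eq) auto
    then show ?thesis by (simp add: ind)
  qed
  have "integral B f = (LINT y:B|lborel. f y)"
    by (rule bm_integral_eq[OF fb C B])
  also have "\<dots> = integral\<^sup>L (distr lborel borel \<psi>) (\<lambda>y. indicator B y *\<^sub>R f y)"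
    unfolding set_lebesgue_integral_def using L by simp
  also have "\<dots> = integral\<^sup>L lborel (\<lambda>x. indicator B (\<psi> x) *\<^sub>R f (\<psi> x))"
    by (subst integral_distr) auto
  also have "\<dots> = (LINT x:(\<phi> ` B)|lborel. f (\<psi> x))"
    unfolding set_lebesgue_integral_def by (simp add: ind)
  also have "\<dots> = integral (\<phi> ` B) (\<lambda>x. f (\<psi> x))"
    using set_borel_integral_eq_integral(2)[of "\<phi> ` B" "\<lambda>x. f (\<psi> x)"] int2
    by (simp add: set_integrable_def)
  finally show ?thesis .
qed

definition cvd :: "(real^'n \<Rightarrow> real^'n) \<Rightarrow> real" where
  "cvd L = \<bar>det (matrix (\<lambda>w. tow (L (fromw w))))\<bar>"

lemma surj_tow: "surj tow" by (metis surjI tow_fromw)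
lemma surj_fromw: "surj fromw" by (metis surjI fromw_tow)

lemma change_vars:
  fixes L :: "real^'n \<Rightarrow> real^'n" and f :: "real^'n \<Rightarrow> real"
  assumes L: "linear L" "surj L" and S: "open S" "bounded S"
    and fb[measurable]: "f \<in> borel_measurable borel" and C: "\<And>x. x \<in> L ` S \<Longrightarrow> norm (f x) \<le> C"
  shows "integral (L ` S) f = cvd L * integral S (\<lambda>x. f (L x))"
proof -
  define L' where "L' = (\<lambda>w. tow (L (fromw w)))"
  have linL': "linear L'" unfolding L'_def
    using linear_compose[OF linear_compose[OF linear_fromw L(1)] linear_tow] by (simp add: comp_def)
  have bl: "bounded_linear L" "bounded_linear tow" "bounded_linear fromw" "bounded_linear L'"
    using L(1) linear_tow linear_fromw linL' linear_conv_bounded_linear by auto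
  have Lm[measurable]: "L \<in> borel_measurable borel" "L' \<in> borel_measurable borel"
    using bl by (auto intro!: borel_measurable_continuous_onI linear_continuous_on)
  have LS: "open (L ` S)" "bounded (L ` S)"
    using S L open_surjective_linear_image bounded_linear_image bl by auto
  have tLS: "open (tow ` L ` S)" "bounded (tow ` L ` S)"
    using LS open_surjective_linear_image bounded_linear_image bl linear_tow surj_tow by auto
  have tS: "open (tow ` S)" "bounded (tow ` S)"
    using S open_surjective_linear_image bounded_linear_image bl linear_tow surj_tow by auto
  have img: "L' ` (tow ` S) = tow ` L ` S"
    by (auto simp: L'_def image_image)
  have C1: "norm (f (fromw y)) \<le> C" if "y \<in> tow ` L ` S" for y
    using that C by auto
  have C2: "norm (f (fromw (L' w))) \<le> C" if "w \<in> tow ` S" for w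
    using that C by (auto simp: L'_def)
  have "integral (L ` S) f = integral (tow ` L ` S) (\<lambda>y. f (fromw y))"
    by (rule transfer_integral[OF lborel_fromw fromw_meas tow_fromw fromw_tow fb C]) (use LS in auto)
  also have "\<dots> = integral (L' ` (tow ` S)) (\<lambda>y. f (fromw y))" by (simp add: img)
  also have "\<dots> = \<bar>det (matrix L')\<bar> * integral (tow ` S) ((\<lambda>y. f (fromw y)) \<circ> L')"
  proof -
    define F where "F = (\<lambda>y. f (fromw y) *\<^sub>R ((\<chi> i. 1) :: real^1))"
    have Fm[measurable]: "F \<in> borel_measurable borel" unfolding F_def
      by measurable
    have "integral (L' ` (tow ` S)) F = \<bar>det (matrix L')\<bar> *\<^sub>R integral (tow ` S) (F \<circ> L')"
      by (rule integral_change_of_variables_linear[OF linL'])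
         (use bm_abs_integrable[OF Fm, of "tow ` L ` S" C] C1 tLS img in \<open>auto simp: F_def norm_real\<close>)
    then have "integral (L' ` (tow ` S)) F $ 1 = \<bar>det (matrix L')\<bar> * integral (tow ` S) (F \<circ> L') $ 1"
      by simp
    moreover have "integral (L' ` (tow ` S)) F $ 1 = integral (L' ` (tow ` S)) (\<lambda>y. f (fromw y))"
      using integral_component_eq_cart[OF bm_integrable_on[OF Fm, of "tow ` L ` S" C], of 1] tLS img C1
      by (auto simp: F_def norm_real)
    moreover have "integral (tow ` S) (F \<circ> L') $ 1 = integral (tow ` S) ((\<lambda>y. f (fromw y)) \<circ> L')"
      using integral_component_eq_cart[OF bm_integrable_on[of "F \<circ> L'" "tow ` S" C], of 1] tS C2
      by (auto simp: F_def comp_def norm_real)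
    ultimately show ?thesis by simp
  qed
  also have "integral (tow ` S) ((\<lambda>y. f (fromw y)) \<circ> L') = integral (fromw ` tow ` S) (\<lambda>x. f (fromw (L' (tow x))))"
    unfolding comp_def
    by (rule transfer_integral[OF lborel_tow tow_meas fromw_tow tow_fromw _ C2]) (use tS in auto)
  also have "\<dots> = integral S (\<lambda>x. f (L x))"
    by (simp add: image_image L'_def)
  finally show ?thesis by (simp add: cvd_def L'_def)
qed

lemma change_vars_measure:
  fixes L :: "real^'n \<Rightarrow> real^'n"
  assumes L: "linear L" "surj L" and S: "open S" "bounded S"
  shows "measure lebesgue (L ` S) = cvd L * measure lebesgue S"
proof -
  have bl: "bounded_linear L" using L linear_conv_bounded_linear by auto
  have LS: "open (L ` S)" "bounded (L ` S)"
    using S L open_surjective_linear_image bounded_linear_image bl by auto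
  have m: "T \<in> lmeasurable" if "open T" "bounded T" for T :: "(real^'n) set"
    using that by (intro bounded_set_imp_lmeasurable) auto
  show ?thesis
    using change_vars[OF L S, of "\<lambda>_. 1" 1] m[OF LS] m[OF S] by (simp add: lmeasure_integral)
qed


lemma ball_measure_pos: "0 < measure lborel (ball (0::real^'n) 1)"
  using content_ball_pos[of 1 "0::real^'n"] by simp  

lemma proj_measurable[measurable]: "(\<lambda>x::real^'n. x /\<^sub>R norm x) \<in> borel_measurable borel"
  by measurable

lemma bounded_comp_proj:
  fixes g :: "real^'n \<Rightarrow> real"
  assumes "continuous_on UNIV g"
  obtains B where "\<And>x. \<bar>g (x /\<^sub>R norm x)\<bar> \<le> B"
proof -
  have "compact (g ` cball 0 1)"
    by (rule compact_continuous_image) (use assms continuous_on_subset in auto)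
  then obtain B where B: "\<And>y. y \<in> g ` cball 0 1 \<Longrightarrow> norm y \<le> B"
    using compact_imp_bounded bounded_iff by metis
  have "x /\<^sub>R norm x \<in> cball 0 1" for x :: "real^'n"
    by (cases "x = 0") auto
  then show ?thesis using B that by force
qed

lemma sphere_integral:
  fixes g :: "real^'n \<Rightarrow> real"
  assumes g: "continuous_on UNIV g"
  shows "integral\<^sup>L sphere_measure g
     = integral (ball 0 1) (\<lambda>x. g (x /\<^sub>R norm x)) / measure lborel (ball (0::real^'n) 1)"
proof -
  let ?B = "ball (0::real^'n) 1"
  let ?m = "measure lborel ?B"
  have gb[measurable]: "g \<in> borel_measurable borel"
    using g by (simp add: borel_measurable_continuous_onI)
  have m: "0 < ?m" by (rule ball_measure_pos)
  have em: "emeasure lborel ?B = ennreal ?m"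
    using emeasure_lborel_ball_finite[of "0::real^'n" 1] by (simp add: emeasure_eq_ennreal_measure)
  have "integral\<^sup>L sphere_measure g = integral\<^sup>L (uniform_measure lborel ?B) (\<lambda>x. g (x /\<^sub>R norm x))"
    unfolding sphere_measure_def by (subst integral_distr) auto
  also have "uniform_measure lborel ?B = density lborel (\<lambda>x. ennreal (indicator ?B x / ?m))"
  proof -
    have "(\<lambda>x. indicator ?B x / ennreal ?m) = (\<lambda>x. ennreal (indicator ?B x / ?m))"
    proof
      fix x show "indicator ?B x / ennreal ?m = ennreal (indicator ?B x / ?m)"
        using divide_ennreal[of 1 ?m] m by (cases "x \<in> ?B") auto
    qed
    then show ?thesis unfolding uniform_measure_def em by (simp only:)
  qed
  also have "integral\<^sup>L \<dots> (\<lambda>x. g (x /\<^sub>R norm x)) = integral\<^sup>L lborel (\<lambda>x. (indicator ?B x / ?m) * g (x /\<^sub>R norm x))"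
    by (subst integral_density) (auto simp: m intro!: borel_measurable_divide borel_measurable_indicator)
  also have "\<dots> = (LINT x : ?B | lborel. g (x /\<^sub>R norm x)) / ?m"
    by (simp add: set_lebesgue_integral_def)
  also have "(LINT x : ?B | lborel. g (x /\<^sub>R norm x)) = integral ?B (\<lambda>x. g (x /\<^sub>R norm x))"
  proof (rule set_borel_integral_eq_integral)
    obtain C where C: "\<And>x. \<bar>g (x /\<^sub>R norm x)\<bar> \<le> C" using bounded_comp_proj[OF g] by blast
    show "set_integrable lborel ?B (\<lambda>x. g (x /\<^sub>R norm x))"
      unfolding set_integrable_def
      by (rule integrableI_bounded_set_indicator[where B=C]) (use emeasure_lborel_ball_finite[of "0::real^'n" 1] C in auto)
  qed
  finally show ?thesis .
qed


lemma measure_lebesgue_ball: "measure lebesgue (ball (0::real^'n) 1) = measure lborel (ball (0::real^'n) 1)"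
  by (simp add: measure_completion)

lemma orth_ball:
  fixes L :: "'a::euclidean_space \<Rightarrow> 'a"
  assumes L: "orthogonal_transformation L" shows "L ` ball 0 1 = ball 0 1"
proof
  show "L ` ball 0 1 \<subseteq> ball 0 1" using orthogonal_transformation_norm[OF L] by auto
  show "ball 0 1 \<subseteq> L ` ball 0 1"
  proof
    fix y :: 'a assume y: "y \<in> ball 0 1"
    obtain x where "y = L x" using orthogonal_transformation_surj[OF L] by (metis surjD)
    then show "y \<in> L ` ball 0 1" using y orthogonal_transformation_norm[OF L, of x] by auto
  qed
qed

lemma cvd_orth:
  fixes L :: "real^'n \<Rightarrow> real^'n"
  assumes "orthogonal_transformation L" shows "cvd L = 1"
proof -
  have "measure lebesgue (L ` ball 0 1) = cvd L * measure lebesgue (ball (0::real^'n) 1)"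
    using orthogonal_transformation_surj[OF assms] orthogonal_transformation_linear[OF assms]
    by (intro change_vars_measure) auto
  then show ?thesis using orth_ball[OF assms] ball_measure_pos[where 'n='n] measure_lebesgue_ball[where 'n='n]
    by simp
qed

lemma sphere_integrable:
  fixes g :: "real^'n \<Rightarrow> real"
  assumes g: "continuous_on UNIV g"
  shows "integrable sphere_measure g"
proof -
  let ?B = "ball (0::real^'n) 1"
  have gb[measurable]: "g \<in> borel_measurable borel"
    using g by (simp add: borel_measurable_continuous_onI)
  obtain C where C: "\<And>x. \<bar>g (x /\<^sub>R norm x)\<bar> \<le> C" using bounded_comp_proj[OF g] by blast
  have "prob_space (uniform_measure lborel ?B)"
    by (rule prob_space_uniform_measure)
       (use emeasure_lborel_ball_finite[of "0::real^'n" 1] ball_measure_pos[where 'n='n] in \<open>auto simp: emeasure_eq_measure2 measure_def\<close>)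
  then interpret prob_space "uniform_measure lborel ?B" .
  have "integrable (uniform_measure lborel ?B) (\<lambda>x. g (x /\<^sub>R norm x))"
    by (rule integrable_const_bound[where B=C]) (use C in auto)
  then show ?thesis unfolding sphere_measure_def
    by (subst integrable_distr_eq) auto
qed

lemma sphere_const: "integral\<^sup>L (sphere_measure :: (real^'n) measure) (\<lambda>_. c) = (c::real)"
proof -
  have "integral\<^sup>L (sphere_measure :: (real^'n) measure) (\<lambda>_. c) = integral (ball (0::real^'n) 1) (\<lambda>_. c) / measure lborel (ball (0::real^'n) 1)"
    by (rule sphere_integral) auto
  also have "integral (ball (0::real^'n) 1) (\<lambda>_. c) = c * integral (ball (0::real^'n) 1) (\<lambda>_. 1)"
    using integral_cmul[of "ball (0::real^'n) 1" c "\<lambda>_. 1::real"] by simp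
  also have "integral (ball (0::real^'n) 1) (\<lambda>_. 1) = measure lebesgue (ball (0::real^'n) 1)"
    by (simp add: lmeasure_integral[symmetric] bounded_set_imp_lmeasurable)
  finally show ?thesis using ball_measure_pos[where 'n='n] by (simp add: measure_lebesgue_ball)
qed

lemma sphere_norm_pow: "integral\<^sup>L (sphere_measure :: (real^'n) measure) (\<lambda>x. norm x ^ k) = 1"
proof -
  have "integral\<^sup>L (sphere_measure :: (real^'n) measure) (\<lambda>x. norm x ^ k) = integral (ball (0::real^'n) 1) (\<lambda>x. norm (x /\<^sub>R norm x) ^ k) / measure lborel (ball (0::real^'n) 1)"
    by (rule sphere_integral) (auto intro!: continuous_intros)
  also have "integral (ball (0::real^'n) 1) (\<lambda>x. norm (x /\<^sub>R norm x) ^ k) = integral (ball (0::real^'n) 1) (\<lambda>_. 1)"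
    by (rule integral_spike[of "{0}"]) auto
  also have "\<dots> = measure lebesgue (ball (0::real^'n) 1)"
    by (simp add: lmeasure_integral[symmetric] bounded_set_imp_lmeasurable)
  finally show ?thesis using ball_measure_pos[where 'n='n] by (simp add: measure_lebesgue_ball)
qed

lemma sphere_rot:
  fixes g :: "real^'n \<Rightarrow> real" and L :: "real^'n \<Rightarrow> real^'n"
  assumes L: "orthogonal_transformation L" and g: "continuous_on UNIV g"
  shows "integral\<^sup>L sphere_measure (\<lambda>x. g (L x)) = integral\<^sup>L sphere_measure g"
proof -
  have lin: "linear L" using L orthogonal_transformation_linear by blast
  have cgL: "continuous_on UNIV (\<lambda>x. g (L x))"
    using lin g by (intro continuous_on_compose2[OF g] linear_continuous_on) (auto simp: linear_conv_bounded_linear)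
  have gb[measurable]: "g \<in> borel_measurable borel"
    using g by (simp add: borel_measurable_continuous_onI)
  obtain C where C: "\<And>x. \<bar>g (x /\<^sub>R norm x)\<bar> \<le> C" using bounded_comp_proj[OF g] by blast
  have "integral (L ` ball 0 1) (\<lambda>y. g (y /\<^sub>R norm y)) = cvd L * integral (ball 0 1) (\<lambda>x. g (L x /\<^sub>R norm (L x)))"
    by (rule change_vars[where C=C]) (use L C orthogonal_transformation_surj[OF L] lin in auto)
  moreover have "(\<lambda>x. g (L x /\<^sub>R norm (L x))) = (\<lambda>x. g (L (x /\<^sub>R norm x)))"
    using L by (simp add: orthogonal_transformation_norm orthogonal_transformation_scaleR)
  ultimately have "integral (ball 0 1) (\<lambda>x. g (L (x /\<^sub>R norm x))) = integral (ball 0 1) (\<lambda>y. g (y /\<^sub>R norm y))"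
    using orth_ball[OF L] cvd_orth[OF L] by simp
  then show ?thesis
    using sphere_integral[OF cgL] sphere_integral[OF g] by simp
qed


lemma phi_norm:
  fixes e z :: "real^'n"
  assumes e: "norm e = 1" and k: "k \<ge> 1"
  shows "integral\<^sup>L sphere_measure (\<lambda>\<theta>. (z \<bullet> \<theta>) ^ k) = norm z ^ k * integral\<^sup>L sphere_measure (\<lambda>\<theta>. (e \<bullet> \<theta>) ^ k)"
proof (cases "z = 0")
  case True
  then show ?thesis using k by (simp add: power_0_left)
next
  case False
  define u where "u = z /\<^sub>R norm z"
  have nu: "norm u = norm e" using False e by (simp add: u_def)
  obtain L where L: "orthogonal_transformation L" "L e = u"
    using orthogonal_transformation_exists[OF nu[symmetric]] by metis
  define M where "M = inv L"
  have M: "orthogonal_transformation M" unfolding M_def by (rule orthogonal_transformation_inv[OF L(1)])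
  have LM: "L (M \<theta>) = \<theta>" for \<theta>
    unfolding M_def using orthogonal_transformation_surj[OF L(1)] by (simp add: surj_f_inv_f)
  have ip: "u \<bullet> \<theta> = e \<bullet> M \<theta>" for \<theta>
  proof -
    have "u \<bullet> \<theta> = L e \<bullet> L (M \<theta>)" using L(2) LM by simp
    also have "\<dots> = e \<bullet> M \<theta>" using L(1) by (simp add: orthogonal_transformation_def)
    finally show ?thesis .
  qed
  have z: "z = norm z *\<^sub>R u" using False by (simp add: u_def)
  have "(\<lambda>\<theta>. (z \<bullet> \<theta>) ^ k) = (\<lambda>\<theta>. norm z ^ k * (e \<bullet> M \<theta>) ^ k)"
  proof
    fix \<theta>
    have "z \<bullet> \<theta> = norm z * (u \<bullet> \<theta>)" by (subst z) simp
    then show "(z \<bullet> \<theta>) ^ k = norm z ^ k * (e \<bullet> M \<theta>) ^ k" by (simp add: ip power_mult_distrib)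
  qed
  then have "integral\<^sup>L sphere_measure (\<lambda>\<theta>. (z \<bullet> \<theta>) ^ k) = norm z ^ k * integral\<^sup>L sphere_measure (\<lambda>\<theta>. (e \<bullet> M \<theta>) ^ k)"
    by simp
  also have "integral\<^sup>L sphere_measure (\<lambda>\<theta>. (e \<bullet> M \<theta>) ^ k) = integral\<^sup>L sphere_measure (\<lambda>\<theta>. (e \<bullet> \<theta>) ^ k)"
    by (rule sphere_rot[OF M, of "\<lambda>\<theta>. (e \<bullet> \<theta>) ^ k"]) (auto intro!: continuous_intros)
  finally show ?thesis .
qed

lemma kappa_pos:
  fixes e :: "real^'n"
  assumes e: "norm e = 1"
  shows "0 < integral\<^sup>L sphere_measure (\<lambda>\<theta>. (e \<bullet> \<theta>) ^ (2*p))"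
proof -
  define f where "f = (\<lambda>x::real^'n. (e \<bullet> (x /\<^sub>R norm x)) ^ (2*p))"
  have fm[measurable]: "f \<in> borel_measurable borel" unfolding f_def by measurable
  have f0: "0 \<le> f x" for x unfolding f_def by (simp add: power_mult)
  have f1: "norm (f x) \<le> 1" for x
  proof -
    have "\<bar>e \<bullet> (x /\<^sub>R norm x)\<bar> \<le> norm e * norm (x /\<^sub>R norm x)" by (rule Cauchy_Schwarz_ineq2)
    also have "\<dots> \<le> 1" using e by (cases "x = 0") auto
    finally have "\<bar>e \<bullet> (x /\<^sub>R norm x)\<bar> ^ (2*p) \<le> 1 ^ (2*p)" by (intro power_mono) auto
    then show ?thesis unfolding f_def by (simp add: power_abs)
  qed
  let ?S = "ball ((1/2) *\<^sub>R e) (1/4)"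
  have lb: "(1/3) ^ (2*p) \<le> f x" if x: "x \<in> ?S" for x
  proof -
    have d: "norm (x - (1/2) *\<^sub>R e) < 1/4" using x by (simp add: dist_norm norm_minus_commute)
    have "\<bar>e \<bullet> (x - (1/2) *\<^sub>R e)\<bar> \<le> norm e * norm (x - (1/2) *\<^sub>R e)" by (rule Cauchy_Schwarz_ineq2)
    with d e have "\<bar>e \<bullet> (x - (1/2) *\<^sub>R e)\<bar> \<le> 1/4" by simp
    moreover have "e \<bullet> x = 1/2 + e \<bullet> (x - (1/2) *\<^sub>R e)"
      using e by (simp add: inner_diff_right dot_square_norm)
    ultimately have ex: "1/4 \<le> e \<bullet> x" by linarith
    have "norm x \<le> norm ((1/2) *\<^sub>R e) + norm (x - (1/2) *\<^sub>R e)" by (metis norm_triangle_sub add.commute)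
    with d e have nx: "norm x \<le> 3/4" by simp
    have xpos: "0 < norm x" using ex by auto
    have "1/3 \<le> (e \<bullet> x) / norm x"
      using ex nx xpos by (simp add: field_simps)
    also have "(e \<bullet> x) / norm x = e \<bullet> (x /\<^sub>R norm x)" by (simp add: divide_inverse mult.commute)
    finally show ?thesis unfolding f_def by (intro power_mono) auto
  qed
  have sub: "?S \<subseteq> ball 0 1"
  proof
    fix x assume x: "x \<in> ?S"
    have "norm x \<le> norm ((1/2) *\<^sub>R e) + norm (x - (1/2) *\<^sub>R e)" by (metis norm_triangle_sub add.commute)
    moreover have "norm (x - (1/2) *\<^sub>R e) < 1/4" using x by (simp add: dist_norm norm_minus_commute)
    ultimately show "x \<in> ball 0 1" using e by simp
  qed
  have mS: "0 < measure lebesgue ?S"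
    using content_ball_pos[of "1/4" "(1/2) *\<^sub>R e"] by (simp add: measure_completion)
  have "(1/3) ^ (2*p) * measure lebesgue ?S = integral ?S (\<lambda>_. (1/3) ^ (2*p))"
    using integral_cmul[of ?S "(1/3) ^ (2*p)" "\<lambda>_. 1::real"]
    by (simp add: lmeasure_integral[symmetric] bounded_set_imp_lmeasurable)
  also have "\<dots> \<le> integral ?S f"
  proof (rule integral_le)
    have "(1/3::real) ^ (2*p) \<le> 1" by (rule power_le_one) auto
    then show "(\<lambda>_. (1/3::real) ^ (2*p)) integrable_on ?S"
      by (intro bm_integrable_on[of _ _ 1]) auto
  qed (use lb bm_integrable_on[OF fm, of ?S 1] f1 in auto)
  also have "\<dots> \<le> integral (ball 0 1) f"
    by (rule integral_subset_le[OF sub]) (use bm_integrable_on[OF fm, of _ 1] f1 f0 in auto)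
  finally have le: "(1/3) ^ (2*p) * measure lebesgue ?S \<le> integral (ball 0 1) f" .
  have "0 < (1/3::real) ^ (2*p) * measure lebesgue ?S" using mS by (intro mult_pos_pos) auto
  with le have pos: "0 < integral (ball 0 1) f" by linarith
  have "integral\<^sup>L sphere_measure (\<lambda>\<theta>. (e \<bullet> \<theta>) ^ (2*p)) = integral (ball 0 1) f / measure lborel (ball (0::real^'n) 1)"
    unfolding f_def by (rule sphere_integral) (auto intro!: continuous_intros)
  then show ?thesis using pos ball_measure_pos[where 'n='n] by simp
qed


definition midx :: "nat \<Rightarrow> ('n::finite \<Rightarrow> nat) set" where
  "midx k = {\<alpha>. sum \<alpha> UNIV = k}"

definition mono :: "('n::finite \<Rightarrow> nat) \<Rightarrow> real^'n \<Rightarrow> real" where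
  "mono \<alpha> x = (\<Prod>i\<in>UNIV. (x $ i) ^ \<alpha> i)"

lemma finite_midx: "finite (midx k :: ('n::finite \<Rightarrow> nat) set)"
proof (rule finite_subset)
  show "midx k \<subseteq> PiE (UNIV::'n set) (\<lambda>_. {..k})"
    by (auto simp: midx_def PiE_UNIV_domain intro: member_le_sum)
  show "finite (PiE (UNIV::'n set) (\<lambda>_. {..k}))" by (intro finite_PiE) auto
qed

lemma sum_upd: "sum (\<alpha>(j := v)) (UNIV::'n::finite set) + \<alpha> j = sum \<alpha> UNIV + (v::nat)"
proof -
  have "sum (\<alpha>(j := v)) UNIV = (\<alpha>(j := v)) j + sum (\<alpha>(j := v)) (UNIV - {j})" by (rule sum.remove) auto
  moreover have "sum (\<alpha>(j := v)) (UNIV - {j}) = sum \<alpha> (UNIV - {j})" by (intro sum.cong) auto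
  moreover have "sum \<alpha> UNIV = \<alpha> j + sum \<alpha> (UNIV - {j})" by (simp add: sum.remove)
  ultimately show ?thesis by simp
qed

lemma prod_upd: "(\<Prod>i\<in>UNIV. (z i :: real) ^ ((\<alpha>(j := \<alpha> j + 1)) i)) = z j * (\<Prod>i\<in>(UNIV::'n::finite set). z i ^ \<alpha> i)"
proof -
  have "(\<Prod>i\<in>UNIV. z i ^ ((\<alpha>(j := \<alpha> j + 1)) i)) = z j ^ ((\<alpha>(j := \<alpha> j + 1)) j) * (\<Prod>i\<in>UNIV - {j}. z i ^ ((\<alpha>(j := \<alpha> j + 1)) i))"
    by (rule prod.remove) auto
  moreover have "(\<Prod>i\<in>UNIV - {j}. z i ^ ((\<alpha>(j := \<alpha> j + 1)) i)) = (\<Prod>i\<in>UNIV - {j}. z i ^ \<alpha> i)"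
    by (intro prod.cong) auto
  moreover have "(\<Prod>i\<in>UNIV. z i ^ \<alpha> i) = z j ^ \<alpha> j * (\<Prod>i\<in>UNIV - {j}. z i ^ \<alpha> i)" by (rule prod.remove) auto
  ultimately show ?thesis by simp
qed

lemma multinomial_exists:
  "\<exists>m. \<forall>z::'n::finite \<Rightarrow> real. (\<Sum>i\<in>UNIV. z i) ^ k = (\<Sum>\<alpha>\<in>midx k. m \<alpha> * (\<Prod>i\<in>UNIV. z i ^ \<alpha> i))"
proof (induction k)
  case 0
  have "midx 0 = {(\<lambda>_. 0) :: 'n \<Rightarrow> nat}" by (auto simp: midx_def)
  then show ?case by (intro exI[of _ "\<lambda>_. 1"]) simp
next
  case (Suc k)
  then obtain m where m: "\<And>z::'n \<Rightarrow> real. (\<Sum>i\<in>UNIV. z i) ^ k = (\<Sum>\<alpha>\<in>midx k. m \<alpha> * (\<Prod>i\<in>UNIV. z i ^ \<alpha> i))"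
    by blast
  define m' where "m' = (\<lambda>\<beta>. \<Sum>j\<in>UNIV. if 1 \<le> \<beta> j then m (\<beta>(j := \<beta> j - 1)) else 0)"
  have re: "(\<Sum>\<alpha>\<in>midx k. m \<alpha> * (\<Prod>i\<in>UNIV. z i ^ ((\<alpha>(j := \<alpha> j + 1)) i)))
      = (\<Sum>\<beta>\<in>midx (Suc k). (if 1 \<le> \<beta> j then m (\<beta>(j := \<beta> j - 1)) else 0) * (\<Prod>i\<in>UNIV. z i ^ \<beta> i))"
    for z :: "'n \<Rightarrow> real" and j
  proof -
    have "(\<Sum>\<beta>\<in>midx (Suc k). (if 1 \<le> \<beta> j then m (\<beta>(j := \<beta> j - 1)) else 0) * (\<Prod>i\<in>UNIV. z i ^ \<beta> i))
        = (\<Sum>\<beta>\<in>{\<beta>\<in>midx (Suc k). 1 \<le> \<beta> j}. m (\<beta>(j := \<beta> j - 1)) * (\<Prod>i\<in>UNIV. z i ^ \<beta> i))"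
      by (subst sum.inter_filter) (auto simp: finite_midx intro!: sum.cong)
    also have "\<dots> = (\<Sum>\<alpha>\<in>midx k. m \<alpha> * (\<Prod>i\<in>UNIV. z i ^ ((\<alpha>(j := \<alpha> j + 1)) i)))"
    proof (rule sum.reindex_bij_witness[where i="\<lambda>\<alpha>. \<alpha>(j := \<alpha> j + 1)" and j="\<lambda>\<beta>. \<beta>(j := \<beta> j - 1)"])
      fix \<beta> :: "'n \<Rightarrow> nat" assume b: "\<beta> \<in> {\<beta> \<in> midx (Suc k). 1 \<le> \<beta> j}"
      then have b1: "1 \<le> \<beta> j" and b2: "sum \<beta> UNIV = Suc k" by (auto simp: midx_def)
      show "(\<beta>(j := \<beta> j - 1))(j := (\<beta>(j := \<beta> j - 1)) j + 1) = \<beta>" using b1 by auto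
      show "\<beta>(j := \<beta> j - 1) \<in> midx k"
        using sum_upd[of \<beta> j "\<beta> j - 1"] b1 b2 by (auto simp: midx_def)
      show "m (\<beta>(j := \<beta> j - 1)) * (\<Prod>i\<in>UNIV. z i ^ ((\<beta>(j := \<beta> j - 1))(j := (\<beta>(j := \<beta> j - 1)) j + 1)) i)
          = m (\<beta>(j := \<beta> j - 1)) * (\<Prod>i\<in>UNIV. z i ^ \<beta> i)"
        using b1 by (simp add: fun_upd_idem)
    next
      fix \<alpha> :: "'n \<Rightarrow> nat" assume a: "\<alpha> \<in> midx k"
      show "\<alpha>(j := \<alpha> j + 1) \<in> {\<beta> \<in> midx (Suc k). 1 \<le> \<beta> j}"
        using a sum_upd[of \<alpha> j "\<alpha> j + 1"] by (auto simp: midx_def)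
      show "(\<alpha>(j := \<alpha> j + 1))(j := (\<alpha>(j := \<alpha> j + 1)) j - 1) = \<alpha>" by auto
    qed
    finally show ?thesis by simp
  qed
  have "(\<Sum>i\<in>UNIV. z i) ^ Suc k = (\<Sum>\<beta>\<in>midx (Suc k). m' \<beta> * (\<Prod>i\<in>UNIV. z i ^ \<beta> i))" for z :: "'n \<Rightarrow> real"
  proof -
    have "(\<Sum>i\<in>UNIV. z i) ^ Suc k = (\<Sum>j\<in>UNIV. z j) * (\<Sum>\<alpha>\<in>midx k. m \<alpha> * (\<Prod>i\<in>UNIV. z i ^ \<alpha> i))"
      by (simp add: m)
    also have "\<dots> = (\<Sum>j\<in>UNIV. \<Sum>\<alpha>\<in>midx k. m \<alpha> * (z j * (\<Prod>i\<in>UNIV. z i ^ \<alpha> i)))"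
      by (subst sum.swap) (simp add: sum_distrib_left sum_distrib_right mult_ac)
    also have "\<dots> = (\<Sum>j\<in>UNIV. \<Sum>\<alpha>\<in>midx k. m \<alpha> * (\<Prod>i\<in>UNIV. z i ^ ((\<alpha>(j := \<alpha> j + 1)) i)))"
      by (simp only: prod_upd)
    also have "\<dots> = (\<Sum>j\<in>UNIV. \<Sum>\<beta>\<in>midx (Suc k). (if 1 \<le> \<beta> j then m (\<beta>(j := \<beta> j - 1)) else 0) * (\<Prod>i\<in>UNIV. z i ^ \<beta> i))"
      by (simp only: re)
    also have "\<dots> = (\<Sum>\<beta>\<in>midx (Suc k). m' \<beta> * (\<Prod>i\<in>UNIV. z i ^ \<beta> i))"
      by (subst sum.swap) (simp add: m'_def sum_distrib_right)
    finally show ?thesis .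
  qed
  then show ?case by blast
qed

lemma inner_power_expand:
  "\<exists>m. \<forall>x y :: real^'n::finite. (x \<bullet> y) ^ k = (\<Sum>\<alpha>\<in>midx k. m \<alpha> * (mono \<alpha> x * mono \<alpha> y))"
proof -
  obtain m where m: "\<And>z::'n \<Rightarrow> real. (\<Sum>i\<in>UNIV. z i) ^ k = (\<Sum>\<alpha>\<in>midx k. m \<alpha> * (\<Prod>i\<in>UNIV. z i ^ \<alpha> i))"
    using multinomial_exists by blast
  have "(x \<bullet> y) ^ k = (\<Sum>\<alpha>\<in>midx k. m \<alpha> * (mono \<alpha> x * mono \<alpha> y))" for x y :: "real^'n"
    using m[of "\<lambda>i. x $ i * y $ i"]
    by (simp add: inner_vec_def mono_def power_mult_distrib prod.distrib)
  then show ?thesis by blast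
qed


lemma sym_inner: "transpose A = A \<Longrightarrow> x \<bullet> (A *v y) = (A *v x) \<bullet> (y::real^'n)"
  by (metis dot_lmul_matrix inner_commute transpose_matrix_vector)

lemma tmm_entry: "(transpose U ** B) $ i $ j = column i U \<bullet> column j (B :: real^'n^'n)"
  by (simp add: matrix_matrix_mult_def transpose_def column_def inner_vec_def)

lemma column_mm: "column j (A ** U) = A *v column j (U :: real^'n^'n)"
  by (simp add: matrix_matrix_mult_def matrix_vector_mult_def column_def vec_eq_iff)

lemma eigen_step:
  fixes A :: "real^'n^'n" and v :: "'n \<Rightarrow> real^'n" and lam :: "'n \<Rightarrow> real"
  assumes sym: "transpose A = A" and K: "finite K" "j \<notin> K"
    and ev: "\<And>i. i \<in> K \<Longrightarrow> norm (v i) = 1 \<and> A *v v i = lam i *\<^sub>R v i"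
  obtains u where "norm u = 1" "\<And>i. i \<in> K \<Longrightarrow> v i \<bullet> u = 0" "A *v u = (u \<bullet> (A *v u)) *\<^sub>R u"
proof -
  let ?q = "\<lambda>x. x \<bullet> (A *v x)"
  define S where "S = sphere (0::real^'n) 1 \<inter> (\<Inter>i\<in>K. {x. v i \<bullet> x = 0})"
  have "card (v ` K) \<le> card K" by (rule card_image_le[OF K(1)])
  also have "card K < card (UNIV :: 'n set)"
    using K by (intro psubset_card_mono) auto
  finally have "dim (v ` K) < DIM(real^'n)"
    using dim_le_card[of "v ` K" "v ` K"] K(1) by (simp add: span_base subsetI)
  then obtain x0 where x0: "x0 \<noteq> 0" "\<And>y. y \<in> span (v ` K) \<Longrightarrow> orthogonal x0 y"
    using orthogonal_to_subspace_exists by blast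
  have x0K: "v i \<bullet> x0 = 0" if "i \<in> K" for i
    using x0(2)[OF span_base[OF imageI[OF that]]] by (simp add: orthogonal_def inner_commute)
  have "x0 /\<^sub>R norm x0 \<in> S"
    using x0 x0K unfolding S_def by auto
  then have Sne: "S \<noteq> {}" by blast
  have Sc: "compact S"
    unfolding S_def
    by (intro compact_Int_closed compact_sphere closed_INT) (auto intro: closed_hyperplane)
  have qc: "continuous_on S ?q"
    by (intro continuous_intros linear_continuous_on) (auto simp: matrix_vector_mul_bounded_linear)
  obtain u where uS: "u \<in> S" and umax: "\<And>y. y \<in> S \<Longrightarrow> ?q y \<le> ?q u"
    using continuous_attains_sup[OF Sc Sne qc] by blast
  have nu: "norm u = 1" and uK: "\<And>i. i \<in> K \<Longrightarrow> v i \<bullet> u = 0" using uS by (auto simp: S_def)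
  have key: "w \<bullet> (A *v u) = 0" if wK: "\<And>i. i \<in> K \<Longrightarrow> v i \<bullet> w = 0" and wu: "u \<bullet> w = 0" for w
  proof (rule ccontr)
    assume a0: "w \<bullet> (A *v u) \<noteq> 0"
    define a where "a = w \<bullet> (A *v u)"
    define c where "c = ?q u * (w \<bullet> w) - ?q w"
    define t where "t = a / (\<bar>c\<bar> + 1)"
    define y where "y = u + t *\<^sub>R w"
    have ny2: "y \<bullet> y = 1 + t^2 * (w \<bullet> w)"
    proof -
      have uu: "u \<bullet> u = 1" using nu by (simp add: norm_eq_1)
      show ?thesis using uu wu unfolding y_def by (simp add: inner_add inner_commute power2_eq_square algebra_simps)
    qed
    have ypos: "0 < y \<bullet> y" unfolding ny2 by (simp add: add_pos_nonneg)
    have yK: "v i \<bullet> y = 0" if "i \<in> K" for i using uK wK that by (simp add: y_def inner_add_right)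
    have "y /\<^sub>R norm y \<in> S"
      using ypos yK unfolding S_def by (auto simp: inner_commute)
    then have "?q (y /\<^sub>R norm y) \<le> ?q u" by (rule umax)
    moreover have "?q (y /\<^sub>R norm y) = ?q y / (y \<bullet> y)"
      by (simp add: matrix_vector_mult_scaleR dot_square_norm power2_eq_square divide_inverse mult_ac)
    ultimately have "?q y \<le> ?q u * (y \<bullet> y)" using ypos by (simp add: divide_le_eq)
    moreover have "?q y = ?q u + 2 * t * a + t^2 * ?q w"
      unfolding y_def a_def using sym_inner[OF sym, of u w]
      by (simp add: matrix_vector_right_distrib matrix_vector_mult_scaleR inner_add inner_commute power2_eq_square algebra_simps)
    ultimately have "2 * t * a \<le> t^2 * c" unfolding ny2 c_def by (simp add: algebra_simps)
    then have ineq: "2 * (a * a) / (\<bar>c\<bar> + 1) \<le> (a * a) * c / ((\<bar>c\<bar> + 1) * (\<bar>c\<bar> + 1))"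
      by (simp add: t_def power2_eq_square)
    have Dp: "0 < (\<bar>c\<bar> + 1) * (\<bar>c\<bar> + 1)" by simp
    have "(2 * (a * a) / (\<bar>c\<bar> + 1)) * ((\<bar>c\<bar> + 1) * (\<bar>c\<bar> + 1)) \<le> ((a * a) * c / ((\<bar>c\<bar> + 1) * (\<bar>c\<bar> + 1))) * ((\<bar>c\<bar> + 1) * (\<bar>c\<bar> + 1))"
      using ineq Dp by (intro mult_right_mono) auto
    moreover have "(2 * (a * a) / (\<bar>c\<bar> + 1)) * ((\<bar>c\<bar> + 1) * (\<bar>c\<bar> + 1)) = 2 * (a * a) * (\<bar>c\<bar> + 1)"
      by (simp add: field_simps)
    moreover have "((a * a) * c / ((\<bar>c\<bar> + 1) * (\<bar>c\<bar> + 1))) * ((\<bar>c\<bar> + 1) * (\<bar>c\<bar> + 1)) = (a * a) * c"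
      using Dp by (simp add: field_simps)
    ultimately have "2 * (a * a) * (\<bar>c\<bar> + 1) \<le> (a * a) * c" by simp
    moreover have "0 < a * a" using a0 a_def by (auto simp: zero_less_mult_iff linorder_neq_iff)
    ultimately have "2 * (\<bar>c\<bar> + 1) \<le> c"
      by (metis mult.assoc mult.commute mult_le_cancel_left_pos)
    then show False by (simp add: abs_if split: if_splits)
  qed
  define r where "r = A *v u - ?q u *\<^sub>R u"
  have rK: "v i \<bullet> r = 0" if "i \<in> K" for i
  proof -
    have "v i \<bullet> (A *v u) = (A *v v i) \<bullet> u" by (rule sym_inner[OF sym])
    also have "\<dots> = 0" using ev[OF that] uK[OF that] by simp
    finally show ?thesis using uK[OF that] by (simp add: r_def inner_diff_right)
  qed
  have ru: "u \<bullet> r = 0"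
    using nu by (simp add: r_def inner_diff_right dot_square_norm)
  have "r \<bullet> (A *v u) = 0" by (rule key[OF rK ru])
  moreover have "r \<bullet> (A *v u) = r \<bullet> r"
    using ru by (simp add: r_def inner_diff_left inner_diff_right inner_commute)
  ultimately have "r = 0" by simp
  then have "A *v u = ?q u *\<^sub>R u" by (simp add: r_def)
  then show ?thesis using that nu uK by blast
qed

lemma eigen_family:
  fixes A :: "real^'n^'n" and K :: "'n set"
  assumes sym: "transpose A = A" and K: "finite K"
  shows "\<exists>v lam. (\<forall>i\<in>K. norm (v i) = 1 \<and> A *v v i = lam i *\<^sub>R v i) \<and> (\<forall>i\<in>K. \<forall>j\<in>K. i \<noteq> j \<longrightarrow> v i \<bullet> v j = 0)"
  using K
proof (induction K rule: finite_induct)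
  case empty then show ?case by simp
next
  case (insert j K)
  from insert.IH obtain v lam where vo: "(\<forall>i\<in>K. norm (v i) = 1 \<and> A *v v i = lam i *\<^sub>R v i) \<and> (\<forall>i\<in>K. \<forall>j\<in>K. i \<noteq> j \<longrightarrow> v i \<bullet> v j = 0)"
    by iprover
  then have v: "\<forall>i\<in>K. norm (v i) = 1 \<and> A *v v i = lam i *\<^sub>R v i"
     and o: "\<forall>i\<in>K. \<forall>j\<in>K. i \<noteq> j \<longrightarrow> v i \<bullet> v j = 0" by auto
  obtain u where u: "norm u = 1" "\<And>i. i \<in> K \<Longrightarrow> v i \<bullet> u = 0" "A *v u = (u \<bullet> (A *v u)) *\<^sub>R u"
    using eigen_step[OF sym insert.hyps(1) insert.hyps(2)] v by blast
  show ?case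
    apply (rule exI[of _ "v(j := u)"], rule exI[of _ "lam(j := u \<bullet> (A *v u))"])
    using v o u insert(2) by (auto simp: inner_commute)
qed

lemma spectral:
  fixes A :: "real^'n^'n"
  assumes sym: "transpose A = A"
  shows "\<exists>ev U. orthogonal_matrix U \<and> transpose U ** A ** U = (\<chi> i j. if i = j then ev i else 0)"
proof -
  from eigen_family[OF sym finite_class.finite_UNIV] obtain v :: "'n \<Rightarrow> real^'n" and lam :: "'n \<Rightarrow> real" where
    vo: "(\<forall>i\<in>UNIV. norm (v i) = 1 \<and> A *v v i = lam i *\<^sub>R v i) \<and> (\<forall>i\<in>UNIV. \<forall>j\<in>UNIV. i \<noteq> j \<longrightarrow> v i \<bullet> v j = 0)"
    by iprover
  then have v: "\<And>i. norm (v i) = 1" "\<And>i. A *v v i = lam i *\<^sub>R v i"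
     and o: "\<And>i j. i \<noteq> j \<Longrightarrow> v i \<bullet> v j = 0" by auto
  define U where "U = (\<chi> r c. v c $ r)"
  have col: "column c U = v c" for c by (simp add: U_def column_def vec_eq_iff)
  have "orthogonal_matrix U"
    unfolding orthogonal_matrix_orthonormal_columns col using v o by (auto simp: orthogonal_def)
  moreover have "transpose U ** A ** U = (\<chi> i j. if i = j then lam i else 0)"
  proof -
    have "(transpose U ** (A ** U)) $ i $ j = (if i = j then lam i else 0)" for i j
      unfolding tmm_entry column_mm col v(2)
      using v(1)[of i] o[of i j] by (auto simp: dot_square_norm)
    then show ?thesis by (simp add: matrix_mul_assoc vec_eq_iff)
  qed
  ultimately show ?thesis by blast
qed


lemma mono_cont: "continuous_on UNIV (mono \<alpha> :: real^'n \<Rightarrow> real)"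
  unfolding mono_def by (intro continuous_intros)

lemma mat_cont: "continuous_on UNIV (\<lambda>x. (P::real^'n^'n) *v x)"
  by (intro linear_continuous_on matrix_vector_mul_bounded_linear)

lemma mono_P_cont: "continuous_on UNIV (\<lambda>x. mono \<alpha> ((P::real^'n^'n) *v x))"
  by (rule continuous_on_compose2[OF mono_cont mat_cont]) auto

lemma S_expand:
  fixes z :: "real^'n" and P :: "real^'n^'n"
  assumes m: "\<And>x y :: real^'n. (x \<bullet> y) ^ k = (\<Sum>\<alpha>\<in>midx k. m \<alpha> * (mono \<alpha> x * mono \<alpha> y))"
  shows "integral\<^sup>L sphere_measure (\<lambda>\<eta>. (z \<bullet> (P *v \<eta>)) ^ k)
       = (\<Sum>\<alpha>\<in>midx k. m \<alpha> * mono \<alpha> z * integral\<^sup>L sphere_measure (\<lambda>\<eta>. mono \<alpha> (P *v \<eta>)))"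
proof -
  have "integral\<^sup>L sphere_measure (\<lambda>\<eta>. (z \<bullet> (P *v \<eta>)) ^ k)
      = integral\<^sup>L sphere_measure (\<lambda>\<eta>. \<Sum>\<alpha>\<in>midx k. (m \<alpha> * mono \<alpha> z) * mono \<alpha> (P *v \<eta>))"
    by (simp add: m mult_ac)
  also have "\<dots> = (\<Sum>\<alpha>\<in>midx k. integral\<^sup>L sphere_measure (\<lambda>\<eta>. (m \<alpha> * mono \<alpha> z) * mono \<alpha> (P *v \<eta>)))"
    by (rule Bochner_Integration.integral_sum[where f="\<lambda>\<alpha> \<eta>. (m \<alpha> * mono \<alpha> z) * mono \<alpha> (P *v \<eta>)"])
       (intro integrable_mult_right sphere_integrable mono_P_cont)
  also have "\<dots> = (\<Sum>\<alpha>\<in>midx k. m \<alpha> * mono \<alpha> z * integral\<^sup>L sphere_measure (\<lambda>\<eta>. mono \<alpha> (P *v \<eta>)))"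
    by simp
  finally show ?thesis .
qed

lemma transpose_inner: "(transpose T *v x) \<bullet> y = x \<bullet> (T *v (y::real^'n))"
  by (simp add: dot_lmul_matrix)

definition kap :: "nat \<Rightarrow> ('n::finite) itself \<Rightarrow> real" where
  "kap k _ = integral\<^sup>L (sphere_measure :: (real^'n) measure) (\<lambda>\<theta>. (axis undefined 1 \<bullet> \<theta>) ^ k)"

lemma phi_kap:
  fixes z :: "real^'n"
  assumes "k \<ge> 1"
  shows "integral\<^sup>L sphere_measure (\<lambda>\<theta>. (z \<bullet> \<theta>) ^ k) = norm z ^ k * kap k TYPE('n)"
  unfolding kap_def by (rule phi_norm[OF norm_axis_1 assms])

lemma kap_pos: "0 < kap (2*p) TYPE('n::finite)"
  unfolding kap_def by (rule kappa_pos[OF norm_axis_1])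

lemma kap_norm_S:
  fixes P :: "real^'n^'n"
  assumes k: "k \<ge> 1"
  shows "kap k TYPE('n) * integral\<^sup>L sphere_measure (\<lambda>\<theta>. norm (P *v \<theta>) ^ k)
     = integral\<^sup>L sphere_measure (\<lambda>\<theta>. integral\<^sup>L sphere_measure (\<lambda>\<eta>. ((P *v \<theta>) \<bullet> (mat 1 *v \<eta>)) ^ k))"
proof -
  have "integral\<^sup>L sphere_measure (\<lambda>\<eta>. ((P *v \<theta>) \<bullet> (mat 1 *v \<eta>)) ^ k) = kap k TYPE('n) * norm (P *v \<theta>) ^ k" for \<theta>
    using phi_kap[OF k, of "P *v \<theta>"] by (simp add: matrix_vector_mul_lid mult.commute)
  then show ?thesis by simp
qed

lemma double_S:
  fixes P :: "real^'n^'n"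
  assumes m: "\<And>x y :: real^'n. (x \<bullet> y) ^ k = (\<Sum>\<alpha>\<in>midx k. m \<alpha> * (mono \<alpha> x * mono \<alpha> y))"
    and k: "k \<ge> 1"
  shows "kap k TYPE('n) * integral\<^sup>L sphere_measure (\<lambda>\<theta>. norm (P *v \<theta>) ^ k)
     = (\<Sum>\<alpha>\<in>midx k. m \<alpha> * integral\<^sup>L sphere_measure (\<lambda>\<theta>. mono \<alpha> (P *v \<theta>)) * integral\<^sup>L sphere_measure (\<lambda>\<eta>. mono \<alpha> (mat 1 *v \<eta>)))"
proof -
  have "kap k TYPE('n) * integral\<^sup>L sphere_measure (\<lambda>\<theta>. norm (P *v \<theta>) ^ k)
      = integral\<^sup>L sphere_measure (\<lambda>\<theta>. \<Sum>\<alpha>\<in>midx k. (m \<alpha> * integral\<^sup>L sphere_measure (\<lambda>\<eta>. mono \<alpha> (mat 1 *v \<eta>))) * mono \<alpha> (P *v \<theta>))"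
    unfolding kap_norm_S[OF k] S_expand[OF m] by (simp add: mult_ac)
  also have "\<dots> = (\<Sum>\<alpha>\<in>midx k. integral\<^sup>L sphere_measure (\<lambda>\<theta>. (m \<alpha> * integral\<^sup>L sphere_measure (\<lambda>\<eta>. mono \<alpha> (mat 1 *v \<eta>))) * mono \<alpha> (P *v \<theta>)))"
    by (rule Bochner_Integration.integral_sum[where f="\<lambda>\<alpha> \<theta>. (m \<alpha> * integral\<^sup>L sphere_measure (\<lambda>\<eta>. mono \<alpha> (mat 1 *v \<eta>))) * mono \<alpha> (P *v \<theta>)"])
       (intro integrable_mult_right sphere_integrable mono_P_cont)
  also have "\<dots> = (\<Sum>\<alpha>\<in>midx k. m \<alpha> * integral\<^sup>L sphere_measure (\<lambda>\<theta>. mono \<alpha> (P *v \<theta>)) * integral\<^sup>L sphere_measure (\<lambda>\<eta>. mono \<alpha> (mat 1 *v \<eta>)))"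
    by (simp add: mult_ac)
  finally show ?thesis .
qed

lemma F_transpose:
  fixes T :: "real^'n^'n"
  assumes p: "p \<ge> 1"
  shows "F_p p (transpose T) = F_p p T"
proof -
  let ?k = "2*p"
  have k: "?k \<ge> 1" using p by simp
  obtain m where m: "\<And>x y :: real^'n. (x \<bullet> y) ^ ?k = (\<Sum>\<alpha>\<in>midx ?k. m \<alpha> * (mono \<alpha> x * mono \<alpha> y))"
    using inner_power_expand by blast
  have m': "\<And>x y :: real^'n. (x \<bullet> y) ^ ?k = (\<Sum>\<alpha>\<in>midx ?k. m \<alpha> * (mono \<alpha> y * mono \<alpha> x))"
    using m by (simp add: mult.commute)
  have A: "kap ?k TYPE('n) * F_p p T = (\<Sum>\<alpha>\<in>midx ?k. m \<alpha> * integral\<^sup>L sphere_measure (\<lambda>\<theta>. mono \<alpha> (T *v \<theta>)) * integral\<^sup>L sphere_measure (\<lambda>\<eta>. mono \<alpha> (mat 1 *v \<eta>)))"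
    unfolding F_p_def by (rule double_S[OF m k])
  have B: "kap ?k TYPE('n) * F_p p (transpose T) = (\<Sum>\<alpha>\<in>midx ?k. m \<alpha> * integral\<^sup>L sphere_measure (\<lambda>\<theta>. mono \<alpha> (transpose T *v \<theta>)) * integral\<^sup>L sphere_measure (\<lambda>\<eta>. mono \<alpha> (mat 1 *v \<eta>)))"
    unfolding F_p_def by (rule double_S[OF m k])
  have C: "kap ?k TYPE('n) * F_p p (transpose T) = (\<Sum>\<alpha>\<in>midx ?k. m \<alpha> * integral\<^sup>L sphere_measure (\<lambda>\<theta>. mono \<alpha> (mat 1 *v \<theta>)) * integral\<^sup>L sphere_measure (\<lambda>\<eta>. mono \<alpha> (T *v \<eta>)))"
  proof -
    have eq: "((transpose T *v \<theta>) \<bullet> (mat 1 *v \<eta>)) = ((mat 1 *v \<theta>) \<bullet> (T *v \<eta>))" for \<theta> \<eta>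
      using transpose_inner[of T \<theta> \<eta>] by (simp add: matrix_vector_mul_lid)
    have "kap ?k TYPE('n) * F_p p (transpose T)
       = integral\<^sup>L sphere_measure (\<lambda>\<theta>. integral\<^sup>L sphere_measure (\<lambda>\<eta>. ((mat 1 *v \<theta>) \<bullet> (T *v \<eta>)) ^ ?k))"
      unfolding F_p_def kap_norm_S[OF k] eq ..
    also have "\<dots> = integral\<^sup>L sphere_measure (\<lambda>\<theta>. \<Sum>\<alpha>\<in>midx ?k. (m \<alpha> * integral\<^sup>L sphere_measure (\<lambda>\<eta>. mono \<alpha> (T *v \<eta>))) * mono \<alpha> (mat 1 *v \<theta>))"
      unfolding S_expand[OF m] by (simp add: mult_ac)
    also have "\<dots> = (\<Sum>\<alpha>\<in>midx ?k. integral\<^sup>L sphere_measure (\<lambda>\<theta>. (m \<alpha> * integral\<^sup>L sphere_measure (\<lambda>\<eta>. mono \<alpha> (T *v \<eta>))) * mono \<alpha> (mat 1 *v \<theta>)))"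
      by (rule Bochner_Integration.integral_sum[where f="\<lambda>\<alpha> \<theta>. (m \<alpha> * integral\<^sup>L sphere_measure (\<lambda>\<eta>. mono \<alpha> (T *v \<eta>))) * mono \<alpha> (mat 1 *v \<theta>)"])
         (intro integrable_mult_right sphere_integrable mono_P_cont)
    also have "\<dots> = (\<Sum>\<alpha>\<in>midx ?k. m \<alpha> * integral\<^sup>L sphere_measure (\<lambda>\<theta>. mono \<alpha> (mat 1 *v \<theta>)) * integral\<^sup>L sphere_measure (\<lambda>\<eta>. mono \<alpha> (T *v \<eta>)))"
      by (simp add: mult_ac)
    finally show ?thesis .
  qed
  have "kap ?k TYPE('n) * F_p p (transpose T) = kap ?k TYPE('n) * F_p p T"
    unfolding C A by (simp add: mult_ac)
  then show ?thesis using kap_pos[where 'n='n and p=p] by simp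
qed


declare transpose_matrix_vector[simp del]

lemma mono_integrable:
  assumes "open \<Omega>" "bounded \<Omega>"
  shows "(mono \<alpha> :: real^'n \<Rightarrow> real) integrable_on \<Omega>"
proof -
  obtain C where C: "\<And>x. x \<in> \<Omega> \<Longrightarrow> norm (mono \<alpha> x) \<le> C" using cont_bound[OF mono_cont assms(2)] by blast
  show ?thesis
    by (rule bm_integrable_on[OF _ C]) (use assms mono_cont in \<open>auto intro: borel_measurable_continuous_onI\<close>)
qed

lemma h_expand:
  fixes \<Omega> :: "(real^'n) set"
  assumes m: "\<And>x y :: real^'n. (x \<bullet> y) ^ k = (\<Sum>\<alpha>\<in>midx k. m \<alpha> * (mono \<alpha> x * mono \<alpha> y))"
    and \<Omega>: "open \<Omega>" "bounded \<Omega>"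
  shows "integral \<Omega> (\<lambda>x. (x \<bullet> y) ^ k) = (\<Sum>\<alpha>\<in>midx k. (m \<alpha> * integral \<Omega> (mono \<alpha>)) * mono \<alpha> y)"
proof -
  have "integral \<Omega> (\<lambda>x. (x \<bullet> y) ^ k) = integral \<Omega> (\<lambda>x. \<Sum>\<alpha>\<in>midx k. (m \<alpha> * mono \<alpha> y) *\<^sub>R mono \<alpha> x)"
    by (simp add: m mult_ac)
  also have "\<dots> = (\<Sum>\<alpha>\<in>midx k. integral \<Omega> (\<lambda>x. (m \<alpha> * mono \<alpha> y) *\<^sub>R mono \<alpha> x))"
    by (rule Henstock_Kurzweil_Integration.integral_sum[OF finite_midx])
       (intro integrable_cmul mono_integrable \<Omega>)
  also have "\<dots> = (\<Sum>\<alpha>\<in>midx k. (m \<alpha> * integral \<Omega> (mono \<alpha>)) * mono \<alpha> y)"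
    by (simp only: integral_cmul) (simp add: mult_ac)
  finally show ?thesis .
qed

lemma orth_mat_transform: "orthogonal_matrix U \<Longrightarrow> orthogonal_transformation (\<lambda>x. (U::real^'n^'n) *v x)"
  by (simp add: orthogonal_transformation_matrix)

lemma h_invariant:
  fixes \<Omega> :: "(real^'n) set" and U :: "real^'n^'n"
  assumes U: "U \<in> isometry_group \<Omega>" and \<Omega>: "open \<Omega>" "bounded \<Omega>"
  shows "integral \<Omega> (\<lambda>x. (x \<bullet> (U *v y)) ^ k) = integral \<Omega> (\<lambda>x. (x \<bullet> y) ^ k)"
proof -
  have Uo: "orthogonal_matrix U" and UO: "(\<lambda>x. U *v x) ` \<Omega> = \<Omega>"
    using U by (auto simp: isometry_group_def)
  define L where "L = (\<lambda>x. transpose U *v x)"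
  have Lo: "orthogonal_transformation L" unfolding L_def
    by (rule orth_mat_transform) (simp add: Uo)
  have tUU: "transpose U ** U = mat 1" using Uo by (simp add: orthogonal_matrix_def)
  have LO: "L ` \<Omega> = \<Omega>"
  proof -
    have "L ` \<Omega> = L ` ((\<lambda>x. U *v x) ` \<Omega>)" by (simp add: UO)
    also have "\<dots> = \<Omega>" by (simp add: image_image L_def matrix_vector_mul_assoc tUU matrix_vector_mul_lid)
    finally show ?thesis .
  qed
  define f where "f = (\<lambda>z::real^'n. (z \<bullet> y) ^ k)"
  have fc: "continuous_on UNIV f" unfolding f_def by (intro continuous_intros)
  obtain C where C: "\<And>x. x \<in> L ` \<Omega> \<Longrightarrow> norm (f x) \<le> C" using cont_bound[OF fc] LO \<Omega> by metis
  have "integral (L ` \<Omega>) f = cvd L * integral \<Omega> (\<lambda>x. f (L x))"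
    by (rule change_vars[OF _ _ \<Omega> _ C])
       (use Lo fc orthogonal_transformation_linear orthogonal_transformation_surj borel_measurable_continuous_onI in auto)
  then have "integral \<Omega> f = integral \<Omega> (\<lambda>x. f (L x))" using LO cvd_orth[OF Lo] by simp
  moreover have "f (L x) = (x \<bullet> (U *v y)) ^ k" for x
    unfolding f_def L_def by (simp add: transpose_inner)
  ultimately show ?thesis by (simp add: f_def)
qed

lemma frame_const:
  fixes \<Omega> :: "(real^'n) set"
  assumes \<Omega>: "open \<Omega>" "bounded \<Omega>" and fr: "admits_p_frames p \<Omega>"
  obtains c0 where "\<And>y. integral \<Omega> (\<lambda>x. (x \<bullet> y) ^ (2*p)) = c0 * norm y ^ (2*p)"
proof -
  obtain m where m: "\<And>x y :: real^'n. (x \<bullet> y) ^ (2*p) = (\<Sum>\<alpha>\<in>midx (2*p). m \<alpha> * (mono \<alpha> x * mono \<alpha> y))"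
    using inner_power_expand by blast
  define h where "h = (\<lambda>y. integral \<Omega> (\<lambda>x. (x \<bullet> y) ^ (2*p)))"
  have "homogeneous_poly (2*p) h"
    unfolding homogeneous_poly_def
    by (rule exI[of _ "\<lambda>\<alpha>. m \<alpha> * integral \<Omega> (mono \<alpha>)"])
       (simp add: h_def h_expand[OF m \<Omega>] midx_def mono_def)
  moreover have "\<forall>U\<in>isometry_group \<Omega>. \<forall>x. h (U *v x) = h x"
    unfolding h_def using h_invariant[OF _ \<Omega>] by blast
  ultimately obtain c where "\<forall>x. h x = c * norm x ^ (2*p)"
    using fr unfolding admits_p_frames_def by blast
  then show ?thesis using that unfolding h_def by blast
qed

lemma core_identity:
  fixes \<Omega> :: "(real^'n) set" and T :: "real^'n^'n"
  assumes \<Omega>: "open \<Omega>" "bounded \<Omega>" and p: "p \<ge> 1"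
    and c0: "\<And>y. integral \<Omega> (\<lambda>x. (x \<bullet> y) ^ (2*p)) = c0 * norm y ^ (2*p)"
  shows "kap (2*p) TYPE('n) * integral \<Omega> (\<lambda>x. norm (T *v x) ^ (2*p)) = c0 * F_p p (transpose T)"
proof -
  let ?k = "2*p"
  have k: "?k \<ge> 1" using p by simp
  obtain m where m: "\<And>x y :: real^'n. (x \<bullet> y) ^ ?k = (\<Sum>\<alpha>\<in>midx ?k. m \<alpha> * (mono \<alpha> x * mono \<alpha> y))"
    using inner_power_expand by blast
  let ?T' = "transpose T"
  have "kap ?k TYPE('n) * integral \<Omega> (\<lambda>x. norm (T *v x) ^ ?k) = integral \<Omega> (\<lambda>x. kap ?k TYPE('n) * norm (T *v x) ^ ?k)"
    using integral_cmul[of \<Omega> "kap ?k TYPE('n)" "\<lambda>x. norm (T *v x) ^ ?k"] by simp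
  also have "\<dots> = integral \<Omega> (\<lambda>x. integral\<^sup>L sphere_measure (\<lambda>\<eta>. (x \<bullet> (?T' *v \<eta>)) ^ ?k))"
  proof -
    have "integral\<^sup>L sphere_measure (\<lambda>\<eta>. (x \<bullet> (?T' *v \<eta>)) ^ ?k) = kap ?k TYPE('n) * norm (T *v x) ^ ?k" for x
    proof -
      have "(x \<bullet> (?T' *v \<eta>)) = (T *v x) \<bullet> \<eta>" for \<eta>
        using transpose_inner[of ?T' x \<eta>] by (simp add: transpose_transpose)
      then show ?thesis using phi_kap[OF k, of "T *v x"] by (simp add: mult.commute)
    qed
    then show ?thesis by simp
  qed
  also have "\<dots> = integral \<Omega> (\<lambda>x. \<Sum>\<alpha>\<in>midx ?k. (m \<alpha> * integral\<^sup>L sphere_measure (\<lambda>\<eta>. mono \<alpha> (?T' *v \<eta>))) *\<^sub>R mono \<alpha> x)"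
    unfolding S_expand[OF m] by (simp add: mult_ac)
  also have "\<dots> = (\<Sum>\<alpha>\<in>midx ?k. integral \<Omega> (\<lambda>x. (m \<alpha> * integral\<^sup>L sphere_measure (\<lambda>\<eta>. mono \<alpha> (?T' *v \<eta>))) *\<^sub>R mono \<alpha> x))"
    by (rule Henstock_Kurzweil_Integration.integral_sum[OF finite_midx])
       (intro integrable_cmul mono_integrable \<Omega>)
  also have "\<dots> = (\<Sum>\<alpha>\<in>midx ?k. (m \<alpha> * integral \<Omega> (mono \<alpha>)) * integral\<^sup>L sphere_measure (\<lambda>\<eta>. mono \<alpha> (?T' *v \<eta>)))"
    by (simp only: integral_cmul) (simp add: mult_ac)
  also have "\<dots> = (\<Sum>\<alpha>\<in>midx ?k. integral\<^sup>L sphere_measure (\<lambda>\<eta>. (m \<alpha> * integral \<Omega> (mono \<alpha>)) * mono \<alpha> (?T' *v \<eta>)))"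
    by simp
  also have "\<dots> = integral\<^sup>L sphere_measure (\<lambda>\<eta>. \<Sum>\<alpha>\<in>midx ?k. (m \<alpha> * integral \<Omega> (mono \<alpha>)) * mono \<alpha> (?T' *v \<eta>))"
    by (rule Bochner_Integration.integral_sum[symmetric, where f="\<lambda>\<alpha> \<eta>. (m \<alpha> * integral \<Omega> (mono \<alpha>)) * mono \<alpha> (?T' *v \<eta>)"])
       (intro integrable_mult_right sphere_integrable mono_P_cont)
  also have "\<dots> = integral\<^sup>L sphere_measure (\<lambda>\<eta>. integral \<Omega> (\<lambda>x. (x \<bullet> (?T' *v \<eta>)) ^ ?k))"
    by (simp add: h_expand[OF m \<Omega>])
  also have "\<dots> = integral\<^sup>L sphere_measure (\<lambda>\<eta>. c0 * norm (?T' *v \<eta>) ^ ?k)"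
    by (simp add: c0)
  also have "\<dots> = c0 * F_p p ?T'"
    by (simp add: F_p_def)
  finally show ?thesis .
qed


declare transpose_matrix_vector[simp del]

lemma conv_pow: "convex_on {0..} (\<lambda>x::real. x ^ p)"
proof (cases "even p")
  case True
  then show ?thesis using convex_power_even convex_on_subset by blast
next
  case False
  then show ?thesis using convex_power_odd by blast
qed

lemma pointwise_upper:
  fixes ev w :: "'n::finite \<Rightarrow> real"
  assumes ev: "\<And>i. 0 \<le> ev i" and w: "\<And>i. 0 \<le> w i" and s1: "sum w UNIV \<le> 1" and p: "p \<ge> 1"
  shows "(\<Sum>i\<in>UNIV. ev i * w i) ^ p \<le> (\<Sum>i\<in>UNIV. ev i ^ p * w i)"
proof (cases "sum w UNIV = 0")
  case True
  then have "\<And>i. w i = 0" using w by (simp add: sum_nonneg_eq_0_iff)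
  then show ?thesis using p by (simp add: power_0_left)
next
  case False
  define s where "s = sum w UNIV"
  have sp: "0 < s" using False w s_def by (simp add: order_neq_le_trans sum_nonneg)
  define a where "a = (\<lambda>i. w i / s)"
  have a1: "(\<Sum>i\<in>UNIV. a i) = 1" using sp by (simp add: a_def s_def sum_divide_distrib[symmetric])
  have a0: "\<And>i. 0 \<le> a i" using w sp by (simp add: a_def)
  have "(\<Sum>i\<in>UNIV. a i *\<^sub>R ev i) ^ p \<le> (\<Sum>i\<in>UNIV. a i * ev i ^ p)"
    by (rule convex_on_sum[OF _ _ conv_pow a1 a0]) (use ev in auto)
  then have J: "(\<Sum>i\<in>UNIV. a i * ev i) ^ p \<le> (\<Sum>i\<in>UNIV. a i * ev i ^ p)" by simp
  have e1: "(\<Sum>i\<in>UNIV. ev i * w i) = s * (\<Sum>i\<in>UNIV. a i * ev i)"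
    using sp by (simp add: a_def sum_distrib_left field_simps)
  have e2: "(\<Sum>i\<in>UNIV. ev i ^ p * w i) = s * (\<Sum>i\<in>UNIV. a i * ev i ^ p)"
    using sp by (simp add: a_def sum_distrib_left field_simps)
  have "(\<Sum>i\<in>UNIV. ev i * w i) ^ p = s ^ p * (\<Sum>i\<in>UNIV. a i * ev i) ^ p" by (simp add: e1 power_mult_distrib)
  also have "\<dots> \<le> s ^ p * (\<Sum>i\<in>UNIV. a i * ev i ^ p)" using J sp by (simp add: mult_left_mono)
  also have "\<dots> \<le> s * (\<Sum>i\<in>UNIV. a i * ev i ^ p)"
  proof (rule mult_right_mono)
    show "s ^ p \<le> s" using power_decreasing[of 1 p s] sp s1 p s_def by simp
    show "0 \<le> (\<Sum>i\<in>UNIV. a i * ev i ^ p)" using a0 ev by (intro sum_nonneg) simp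
  qed
  finally show ?thesis by (simp add: e2)
qed

lemma tangent_pow:
  fixes x a :: real
  assumes "0 \<le> x" "0 < a"
  shows "a ^ p + real p * a ^ (p - 1) * (x - a) \<le> x ^ p"
proof -
  have "real p * a ^ (p - 1) * (x - a) \<le> x ^ p - a ^ p"
    by (rule convex_on_imp_above_tangent[OF conv_pow])
       (use assms in \<open>auto intro!: derivative_eq_intros simp: interior_real_atLeast\<close>)
  then show ?thesis by simp
qed

lemma powr_root_pow: "0 \<le> x \<Longrightarrow> n > 0 \<Longrightarrow> (x powr (1 / real n)) ^ n = (x::real)"
proof (cases "x = 0")
  case False
  assume "0 \<le> x" "n > 0"
  then have "(x powr (1 / real n)) ^ n = x powr (1 / real n * real n)"
    by (simp add: powr_realpow[symmetric] powr_powr False)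
  then show ?thesis using \<open>n > 0\<close> \<open>0 \<le> x\<close> False by simp
qed simp


declare transpose_matrix_vector[simp del]

lemma diag_formula:
  fixes T U :: "real^'n^'n"
  assumes D: "transpose U ** (transpose T ** T) ** U = (\<chi> i j. if i = j then ev i else 0)"
  shows "norm (T *v (U *v w)) ^ 2 = (\<Sum>i\<in>UNIV. ev i * (w $ i) ^ 2)"
proof -
  define M where "M = T ** U"
  have "norm (T *v (U *v w)) ^ 2 = (M *v w) \<bullet> (M *v w)"
    by (simp add: M_def matrix_vector_mul_assoc power2_norm_eq_inner)
  also have "\<dots> = (transpose M *v (M *v w)) \<bullet> w"
    by (rule transpose_inner[symmetric])
  also have "transpose M *v (M *v w) = (\<chi> i j. if i = j then ev i else 0) *v w"
    by (simp add: M_def matrix_vector_mul_assoc matrix_transpose_mul matrix_mul_assoc D[symmetric])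
  also have "(\<chi> i j. if i = j then ev i else 0) *v w = (\<chi> i. ev i * w $ i)"
  proof -
    have "(\<Sum>j\<in>UNIV. (if i = j then ev i else 0) * w $ j) = ev i * w $ i" for i
    proof -
      have "(\<Sum>j\<in>UNIV. (if i = j then ev i else 0) * w $ j) = (\<Sum>j\<in>UNIV. if i = j then ev i * w $ j else 0)"
        by (intro sum.cong) auto
      then show ?thesis by simp
    qed
    then show ?thesis by (simp add: matrix_vector_mult_def vec_eq_iff)
  qed
  also have "(\<chi> i. ev i * w $ i) \<bullet> w = (\<Sum>i\<in>UNIV. ev i * (w $ i) ^ 2)"
    by (simp add: inner_vec_def power2_eq_square mult_ac)
  finally show ?thesis .
qed

lemma sphere_AE_le1: "AE \<theta> in (sphere_measure :: (real^'n) measure). norm \<theta> \<le> 1"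
proof -
  have m: "{x \<in> space borel. norm (x::real^'n) \<le> 1} \<in> sets borel"
  proof -
    have "{x \<in> space borel. norm (x::real^'n) \<le> 1} = cball 0 1" by auto
    then show ?thesis by simp
  qed
  have aux: "norm (x /\<^sub>R norm x) \<le> 1" for x :: "real^'n" by (cases "x = 0") auto
  have "AE x in uniform_measure lborel (ball (0::real^'n) 1). norm (x /\<^sub>R norm x) \<le> 1"
    by (intro AE_I2 aux)
  then show ?thesis unfolding sphere_measure_def
    by (subst AE_distr_iff) (use m in auto)
qed

lemma norm_sq_sum: "norm (x::real^'n) ^ 2 = (\<Sum>i\<in>UNIV. (x $ i) ^ 2)"
  by (simp only: power2_norm_eq_inner inner_vec_def inner_real_def) (simp add: power2_eq_square)

lemma coord_moment:
  "integral\<^sup>L (sphere_measure :: (real^'n) measure) (\<lambda>\<theta>. (\<theta> $ i) ^ 2) = 1 / real CARD('n)"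
proof -
  have e: "integral\<^sup>L (sphere_measure :: (real^'n) measure) (\<lambda>\<theta>. (\<theta> $ j) ^ 2) = kap 2 TYPE('n)" for j
    using phi_kap[of 2 "axis j 1 :: real^'n"] by (simp add: inner_axis' )
  have "(\<Sum>j\<in>(UNIV::'n set). integral\<^sup>L (sphere_measure :: (real^'n) measure) (\<lambda>\<theta>. (\<theta> $ j) ^ 2))
      = integral\<^sup>L (sphere_measure :: (real^'n) measure) (\<lambda>\<theta>. \<Sum>j\<in>UNIV. (\<theta> $ j) ^ 2)"
    by (rule Bochner_Integration.integral_sum[symmetric]) (intro sphere_integrable continuous_intros)
  also have "\<dots> = 1" using sphere_norm_pow[of 2, where 'n='n] by (simp add: norm_sq_sum)
  finally have "real CARD('n) * kap 2 TYPE('n) = 1" by (simp add: e)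
  then show ?thesis using e[of i] by (simp add: field_simps)
qed

lemma sv_bounds:
  fixes T :: "real^'n^'n"
  assumes p: "p \<ge> 1"
  defines "d \<equiv> real CARD('n)"
  shows "1 / d ^ p * hs_norm T ^ (2*p) \<le> F_p p T \<and> F_p p T \<le> 1 / d * schatten (2*p) T ^ (2*p)"
proof -
  have dpos: "0 < d" unfolding d_def by simp
  have symA: "transpose (transpose T ** T) = transpose T ** T"
    by (simp add: matrix_transpose_mul)
  define ev where "ev = sq_singular_values T"
  have "\<exists>U. orthogonal_matrix U \<and> transpose U ** (transpose T ** T) ** U = (\<chi> i j. if i = j then ev i else 0)"
    unfolding ev_def sq_singular_values_def by (rule someI_ex[OF spectral[OF symA]])
  then obtain U where U: "orthogonal_matrix U"
    and D: "transpose U ** (transpose T ** T) ** U = (\<chi> i j. if i = j then ev i else 0)" by blast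
  have df: "norm (T *v (U *v w)) ^ 2 = (\<Sum>i\<in>UNIV. ev i * (w $ i) ^ 2)" for w
    by (rule diag_formula[OF D])
  have ev0: "0 \<le> ev i" for i
  proof -
    have "(\<Sum>j\<in>UNIV. ev j * (axis i 1 $ j) ^ 2) = (\<Sum>j\<in>UNIV. if j = i then ev j else 0)"
      by (intro sum.cong) (auto simp: axis_def)
    then have "ev i = (\<Sum>j\<in>UNIV. ev j * (axis i 1 $ j) ^ 2)" by simp
    also have "\<dots> = norm (T *v (U *v axis i 1)) ^ 2" by (simp add: df)
    finally show ?thesis by simp
  qed
  have UUt: "U ** transpose U = mat 1" using U by (simp add: orthogonal_matrix_def)
  define g where "g = (\<lambda>w::real^'n. \<Sum>i\<in>UNIV. ev i * (w $ i) ^ 2)"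
  define G where "G = (\<lambda>w::real^'n. (g w) ^ p)"
  have gc: "continuous_on UNIV g" unfolding g_def by (intro continuous_intros)
  have Gc: "continuous_on UNIV G" unfolding G_def g_def by (intro continuous_intros)
  have g0: "0 \<le> g w" for w unfolding g_def using ev0 by (intro sum_nonneg) simp
  have FG: "F_p p T = integral\<^sup>L sphere_measure G"
  proof -
    have "norm (T *v \<theta>) ^ (2*p) = G (transpose U *v \<theta>)" for \<theta>
    proof -
      have "\<theta> = U *v (transpose U *v \<theta>)" by (simp add: matrix_vector_mul_assoc UUt matrix_vector_mul_lid)
      then have "norm (T *v \<theta>) ^ 2 = g (transpose U *v \<theta>)" unfolding g_def by (metis df)
      then show ?thesis unfolding G_def by (simp add: power_mult)
    qed
    then have "F_p p T = integral\<^sup>L sphere_measure (\<lambda>\<theta>. G (transpose U *v \<theta>))" by (simp add: F_p_def)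
    also have "\<dots> = integral\<^sup>L sphere_measure G"
      by (rule sphere_rot[OF orth_mat_transform Gc]) (simp add: U)
    finally show ?thesis .
  qed
  have Sg: "integral\<^sup>L sphere_measure g = (\<Sum>i\<in>UNIV. ev i) / d"
  proof -
    have "integral\<^sup>L sphere_measure g = (\<Sum>i\<in>UNIV. integral\<^sup>L sphere_measure (\<lambda>w::real^'n. ev i * (w $ i) ^ 2))"
      unfolding g_def by (rule Bochner_Integration.integral_sum) (intro sphere_integrable continuous_intros)
    also have "\<dots> = (\<Sum>i\<in>UNIV. ev i / d)" by (simp add: coord_moment d_def)
    finally show ?thesis by (simp add: sum_divide_distrib)
  qed
  have upper: "F_p p T \<le> (\<Sum>i\<in>UNIV. ev i ^ p) / d"
  proof -
    have "integral\<^sup>L sphere_measure G \<le> integral\<^sup>L sphere_measure (\<lambda>w::real^'n. \<Sum>i\<in>UNIV. ev i ^ p * (w $ i) ^ 2)"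
    proof (rule integral_mono_AE)
      show "integrable sphere_measure G" by (rule sphere_integrable[OF Gc])
      show "integrable sphere_measure (\<lambda>w::real^'n. \<Sum>i\<in>UNIV. ev i ^ p * (w $ i) ^ 2)"
        by (intro sphere_integrable continuous_intros)
      show "AE w in sphere_measure. G w \<le> (\<Sum>i\<in>UNIV. ev i ^ p * (w $ i) ^ 2)"
        using sphere_AE_le1
      proof (rule AE_mp, intro AE_I2 impI)
        fix w :: "real^'n" assume "norm w \<le> 1"
        then have "norm w ^ 2 \<le> 1" by (simp add: power_le_one)
        then have "sum (\<lambda>i. (w $ i) ^ 2) UNIV \<le> 1" by (simp add: norm_sq_sum)
        then show "G w \<le> (\<Sum>i\<in>UNIV. ev i ^ p * (w $ i) ^ 2)"
          unfolding G_def g_def using pointwise_upper[of ev "\<lambda>i. (w $ i)^2" p] ev0 p by simp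
      qed
    qed
    also have "\<dots> = (\<Sum>i\<in>UNIV. integral\<^sup>L sphere_measure (\<lambda>w::real^'n. ev i ^ p * (w $ i) ^ 2))"
      by (rule Bochner_Integration.integral_sum) (intro sphere_integrable continuous_intros)
    also have "\<dots> = (\<Sum>i\<in>UNIV. ev i ^ p / d)" by (simp add: coord_moment d_def)
    finally show ?thesis using FG by (simp add: sum_divide_distrib)
  qed
  define a where "a = (\<Sum>i\<in>UNIV. ev i) / d"
  have a0: "0 \<le> a" unfolding a_def using ev0 dpos by (simp add: sum_nonneg)
  have lower: "a ^ p \<le> F_p p T"
  proof (cases "a = 0")
    case True
    have "0 \<le> integral\<^sup>L sphere_measure G"
      by (rule integral_nonneg_AE) (simp add: G_def g0)
    then show ?thesis using True p FG by (simp add: power_0_left)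
  next
    case False
    then have apos: "0 < a" using a0 by simp
    have "integral\<^sup>L sphere_measure (\<lambda>w::real^'n. a ^ p + real p * a ^ (p - 1) * (g w - a)) \<le> integral\<^sup>L sphere_measure G"
    proof (rule integral_mono)
      show "integrable sphere_measure (\<lambda>w::real^'n. a ^ p + real p * a ^ (p - 1) * (g w - a))"
        by (intro sphere_integrable continuous_intros gc)
      show "integrable sphere_measure G" by (rule sphere_integrable[OF Gc])
      show "a ^ p + real p * a ^ (p - 1) * (g w - a) \<le> G w" for w
        unfolding G_def by (rule tangent_pow[OF g0 apos])
    qed
    also have "integral\<^sup>L sphere_measure (\<lambda>w::real^'n. a ^ p + real p * a ^ (p - 1) * (g w - a))
       = a ^ p + real p * a ^ (p - 1) * (integral\<^sup>L sphere_measure g - a)"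
    proof -
      have ig: "integrable sphere_measure g" by (rule sphere_integrable[OF gc])
      have "integral\<^sup>L sphere_measure (\<lambda>w::real^'n. a ^ p + real p * a ^ (p - 1) * (g w - a))
          = integral\<^sup>L sphere_measure (\<lambda>_::real^'n. a ^ p) + integral\<^sup>L sphere_measure (\<lambda>w::real^'n. real p * a ^ (p - 1) * (g w - a))"
        by (rule Bochner_Integration.integral_add) (auto intro!: sphere_integrable continuous_intros gc)
      also have "integral\<^sup>L sphere_measure (\<lambda>w::real^'n. real p * a ^ (p - 1) * (g w - a))
          = real p * a ^ (p - 1) * (integral\<^sup>L sphere_measure g - integral\<^sup>L sphere_measure (\<lambda>_::real^'n. a))"
        using ig by (simp add: Bochner_Integration.integral_diff[OF ig] sphere_integrable)
      moreover have "Sigma_Algebra.measure (sphere_measure :: (real^'n) measure) (space sphere_measure) = 1"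
        using sphere_const[of 1, where 'n='n] by simp
      ultimately show ?thesis by simp
    qed
    also have "\<dots> = a ^ p" by (simp add: Sg a_def)
    finally show ?thesis using FG by simp
  qed
  have sv: "singular_values T i ^ (2*p) = ev i ^ p" for i
    unfolding singular_values_def ev_def[symmetric] using ev0[of i]
    by (simp add: power_mult)
  have hs: "hs_norm T ^ (2*p) = (\<Sum>i\<in>UNIV. ev i) ^ p"
  proof -
    have "hs_norm T = (\<Sum>i\<in>UNIV. ev i) powr (1 / real 2)"
    proof -
      have "singular_values T i ^ 2 = ev i" for i
        unfolding singular_values_def ev_def[symmetric] using ev0[of i] by simp
      then show ?thesis unfolding hs_norm_def schatten_def by simp
    qed
    then have "hs_norm T ^ 2 = (\<Sum>i\<in>UNIV. ev i)"
      using powr_root_pow[of "\<Sum>i\<in>UNIV. ev i" 2] ev0 by (simp add: sum_nonneg)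
    then show ?thesis by (simp add: power_mult)
  qed
  have sc: "schatten (2*p) T ^ (2*p) = (\<Sum>i\<in>UNIV. ev i ^ p)"
    unfolding schatten_def sv
    by (rule powr_root_pow) (use ev0 p in \<open>auto intro: sum_nonneg\<close>)
  have "1 / d ^ p * hs_norm T ^ (2*p) = a ^ p"
    unfolding hs a_def by (simp add: power_divide)
  then show ?thesis using lower upper sc by simp
qed


declare transpose_matrix_vector[simp del]

lemma pos_moment:
  fixes \<Omega> :: "(real^'n) set"
  assumes \<Omega>: "open \<Omega>" "bounded \<Omega>" "\<Omega> \<noteq> {}"
  shows "0 < integral \<Omega> (\<lambda>x. norm x ^ k)"
proof -
  obtain a where a: "a \<in> \<Omega>" using \<Omega>(3) by blast
  obtain r where r: "0 < r" "ball a r \<subseteq> \<Omega>" using \<Omega>(1) a open_contains_ball by blast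
  define b where "b = (if a = 0 then (r/2) *\<^sub>R axis undefined (1::real) else a)"
  have b0: "b \<noteq> 0" using r by (simp add: b_def)
  have bab: "dist a b < r" using r by (simp add: b_def dist_norm)
  define \<rho> where "\<rho> = min (r - dist a b) (norm b / 2)"
  have rho: "0 < \<rho>" using bab b0 by (simp add: \<rho>_def)
  have sub: "ball b \<rho> \<subseteq> \<Omega>"
  proof
    fix x assume "x \<in> ball b \<rho>"
    then have "dist b x < r - dist a b" by (simp add: \<rho>_def)
    then have "dist a x < r" using dist_triangle[of a x b] by linarith
    then show "x \<in> \<Omega>" using r by auto
  qed
  have lb: "(norm b / 2) ^ k \<le> norm x ^ k" if x: "x \<in> ball b \<rho>" for x
  proof -
    have "dist b x < norm b / 2" using x by (simp add: \<rho>_def)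
    moreover have "norm b \<le> norm x + dist b x" by (metis dist_norm norm_triangle_sub add.commute)
    ultimately have "norm b / 2 \<le> norm x" by simp
    then show ?thesis by (intro power_mono) auto
  qed
  have fc: "continuous_on UNIV (\<lambda>x::real^'n. norm x ^ k)" by (intro continuous_intros)
  have int: "(\<lambda>x::real^'n. norm x ^ k) integrable_on S" if S: "bounded S" "open S" for S
  proof -
    obtain C where Cb: "\<And>x. x \<in> S \<Longrightarrow> norm (norm x ^ k) \<le> C" using cont_bound[OF fc S(1)] by blast
    show ?thesis by (rule bm_integrable_on[OF _ Cb]) (use S fc in \<open>auto intro: borel_measurable_continuous_onI\<close>)
  qed
  have mpos: "0 < measure lebesgue (ball b \<rho>)"
    using content_ball_pos[OF rho, of b] by (simp add: measure_completion)
  have "(norm b / 2) ^ k * measure lebesgue (ball b \<rho>) = integral (ball b \<rho>) (\<lambda>_. (norm b / 2) ^ k)"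
    using integral_cmul[of "ball b \<rho>" "(norm b / 2) ^ k" "\<lambda>_. 1::real"]
    by (simp add: lmeasure_integral[symmetric] bounded_set_imp_lmeasurable)
  also have "\<dots> \<le> integral (ball b \<rho>) (\<lambda>x. norm x ^ k)"
  proof (rule integral_le)
    show "(\<lambda>_::real^'n. (norm b / 2) ^ k) integrable_on ball b \<rho>"
      by (rule bm_integrable_on[of _ _ "(norm b / 2) ^ k"]) auto
  qed (use lb int in auto)
  also have "\<dots> \<le> integral \<Omega> (\<lambda>x. norm x ^ k)"
    by (rule integral_subset_le[OF sub]) (use int \<Omega> in auto)
  finally have le: "(norm b / 2) ^ k * measure lebesgue (ball b \<rho>) \<le> integral \<Omega> (\<lambda>x. norm x ^ k)" .
  have "0 < (norm b / 2) ^ k * measure lebesgue (ball b \<rho>)" using b0 mpos by simp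
  with le show ?thesis by linarith
qed

lemma vol_pos:
  fixes \<Omega> :: "(real^'n) set"
  assumes \<Omega>: "open \<Omega>" "bounded \<Omega>" "\<Omega> \<noteq> {}"
  shows "0 < measure lebesgue \<Omega>"
proof -
  obtain a where a: "a \<in> \<Omega>" using \<Omega>(3) by blast
  obtain r where r: "0 < r" "ball a r \<subseteq> \<Omega>" using \<Omega>(1) a open_contains_ball by blast
  have m1: "measure lebesgue (ball a r) \<le> measure lebesgue \<Omega>"
    by (rule measure_mono_fmeasurable[OF r(2)]) (use \<Omega> in \<open>auto intro: bounded_set_imp_lmeasurable\<close>)
  have m2: "measure lebesgue (ball a r) = measure lborel (ball a r)" by (simp add: measure_completion)
  have m3: "0 < measure lborel (ball a r)" using content_ball_pos[OF r(1), of a] by simp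
  from m1 m2 m3 show ?thesis by linarith
qed

theorem lemma6p1:
  fixes \<Omega> :: "(real^'n) set" and T :: "real^'n^'n" and p :: nat
  assumes "open \<Omega>" and "connected \<Omega>" and "\<Omega> \<noteq> {}" and "bounded \<Omega>"
    and "p \<ge> 1" and "invertible T"
    and "admits_p_frames p \<Omega>"
  defines "d \<equiv> real CARD('n)"
  defines "R \<equiv> I_moment (2*p) ((\<lambda>x. T *v x) ` \<Omega>) / I_moment (2*p) \<Omega>
      * (vol \<Omega> powr (1 + 4 * real p / d)
         / (vol ((\<lambda>x. matrix_inv T *v x) ` \<Omega>) powr (2 * real p / d)
            * vol ((\<lambda>x. T *v x) ` \<Omega>) powr (1 + 2 * real p / d)))"
  shows "F_p p T = R
    \<and> (irreducible_isometry_group \<Omega> \<longrightarrow>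
         1 / d ^ p * hs_norm T ^ (2*p) \<le> R \<and> R \<le> 1 / d * schatten (2*p) T ^ (2*p))"
proof -
  have op: "open \<Omega>" and bd: "bounded \<Omega>" and ne: "\<Omega> \<noteq> {}" and p: "p \<ge> 1"
    using assms by auto
  let ?k = "2*p"
  let ?kap = "kap (2*p) TYPE('n)"
  have kpos: "0 < ?kap" by (rule kap_pos)
  obtain c0 where c0: "\<And>y. integral \<Omega> (\<lambda>x. (x \<bullet> y) ^ (2*p)) = c0 * norm y ^ (2*p)"
    using frame_const[OF op bd assms(7)] by blast
  define F where "F = F_p p T"
  have JT: "?kap * integral \<Omega> (\<lambda>x. norm (T *v x) ^ ?k) = c0 * F"
    using core_identity[OF op bd p c0, of T] F_transpose[OF p, of T] by (simp add: F_def)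
  have F1: "F_p p (mat 1 :: real^'n^'n) = 1"
    unfolding F_p_def by (simp add: matrix_vector_mul_lid sphere_norm_pow)
  define I0 where "I0 = integral \<Omega> (\<lambda>x. norm x ^ ?k)"
  have J1: "?kap * I0 = c0"
    using core_identity[OF op bd p c0, of "mat 1"] F1 by (simp add: I0_def matrix_vector_mul_lid transpose_mat)
  have I0pos: "0 < I0" unfolding I0_def by (rule pos_moment[OF op bd ne])
  obtain Ti where Ti: "T ** Ti = mat 1" "Ti ** T = mat 1" using assms(6) by (auto simp: invertible_def)
  have Tinv: "matrix_inv T ** T = mat 1" "T ** matrix_inv T = mat 1"
    using someI_ex[of "\<lambda>A'. T ** A' = mat 1 \<and> A' ** T = mat 1"] Ti unfolding matrix_inv_def by blast+
  define L where "L = (\<lambda>x. T *v x)"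
  define Li where "Li = (\<lambda>x. matrix_inv T *v x)"
  have linL: "linear L" "linear Li" unfolding L_def Li_def by (auto intro: matrix_vector_mul_linear)
  have surjL: "surj L"
    unfolding L_def by (rule surjI[of _ "\<lambda>y. matrix_inv T *v y"]) (simp add: matrix_vector_mul_assoc Tinv matrix_vector_mul_lid)
  have surjLi: "surj Li"
    unfolding Li_def by (rule surjI[of _ "\<lambda>y. T *v y"]) (simp add: matrix_vector_mul_assoc Tinv matrix_vector_mul_lid)
  have LLi: "L ` (Li ` \<Omega>) = \<Omega>"
    by (simp add: image_image L_def Li_def matrix_vector_mul_assoc Tinv matrix_vector_mul_lid)
  have Li_open: "open (Li ` \<Omega>)" "bounded (Li ` \<Omega>)"
    using open_surjective_linear_image[OF op linL(2) surjLi]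
      bounded_linear_image[OF bd linear_conv_bounded_linear[THEN iffD1, OF linL(2)]] by auto
  have L_bd: "bounded (L ` \<Omega>)"
    using bounded_linear_image[OF bd linear_conv_bounded_linear[THEN iffD1, OF linL(1)]] by auto
  have fc: "continuous_on UNIV (\<lambda>x::real^'n. norm x ^ ?k)" by (intro continuous_intros)
  obtain C where C: "\<And>x. x \<in> L ` \<Omega> \<Longrightarrow> norm (norm x ^ ?k) \<le> C" using cont_bound[OF fc L_bd] by blast
  have IT: "I_moment ?k (L ` \<Omega>) = cvd L * integral \<Omega> (\<lambda>x. norm (T *v x) ^ ?k)"
    unfolding I_moment_def L_def
    by (rule change_vars[OF _ _ op bd _ C[unfolded L_def]])
       (use linL surjL fc in \<open>auto simp: L_def intro: borel_measurable_continuous_onI\<close>)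
  have ratio: "I_moment ?k (L ` \<Omega>) / I_moment ?k \<Omega> = cvd L * F"
  proof -
    have "?kap * integral \<Omega> (\<lambda>x. norm (T *v x) ^ ?k) = ?kap * (I0 * F)"
      using JT J1 by (simp add: mult_ac)
    then have "integral \<Omega> (\<lambda>x. norm (T *v x) ^ ?k) = I0 * F"
      using kpos by simp
    then show ?thesis using IT I0pos by (simp add: I_moment_def I0_def[symmetric])
  qed
  define V where "V = vol \<Omega>"
  have Vpos: "0 < V" unfolding V_def vol_def by (rule vol_pos[OF op bd ne])
  have VL: "vol (L ` \<Omega>) = cvd L * V"
    unfolding vol_def V_def by (rule change_vars_measure[OF linL(1) surjL op bd])
  have VLi: "vol (Li ` \<Omega>) = cvd Li * V"
    unfolding vol_def V_def by (rule change_vars_measure[OF linL(2) surjLi op bd])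
  have "V = cvd L * vol (Li ` \<Omega>)"
    using change_vars_measure[OF linL(1) surjL Li_open] LLi by (simp add: vol_def V_def)
  then have DD: "cvd L * cvd Li = 1" using VLi Vpos by (simp add: field_simps)
  have D0: "0 \<le> cvd L" "0 \<le> cvd Li" by (auto simp: cvd_def)
  then have Dpos: "0 < cvd L" using DD by (cases "cvd L = 0") auto
  define q where "q = 2 * real p / d"
  have q4: "4 * real p / d = 2 * q" by (simp add: q_def)
  have volfac: "vol \<Omega> powr (1 + 4 * real p / d) / (vol (Li ` \<Omega>) powr (2 * real p / d) * vol (L ` \<Omega>) powr (1 + 2 * real p / d))
      = 1 / cvd L"
  proof -
    let ?D = "cvd L" and ?E = "cvd Li"
    have Epos: "0 < ?E" using DD D0 by (cases "?E = 0") auto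
    have "vol \<Omega> powr (1 + 4 * real p / d) = V * (V powr q * V powr q)"
    proof -
      have e: "1 + 2 * q = 1 + (q + q)" by simp
      show ?thesis unfolding q4 V_def[symmetric] e powr_add using Vpos by simp
    qed
    moreover have "vol (Li ` \<Omega>) powr (2 * real p / d) = ?E powr q * V powr q"
      unfolding VLi q_def[symmetric] using Epos Vpos by (simp add: powr_mult)
    moreover have "vol (L ` \<Omega>) powr (1 + 2 * real p / d) = ?D * ?D powr q * (V * V powr q)"
      unfolding VL q_def[symmetric] using Dpos Vpos by (simp add: powr_mult powr_add)
    moreover have "?E powr q * ?D powr q = 1"
      using DD Epos Dpos by (simp add: powr_mult[symmetric] mult.commute)
    ultimately show ?thesis using Vpos Dpos Epos
      by (simp add: field_simps)
  qed
  have FR: "F_p p T = R"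
    unfolding R_def L_def[symmetric] Li_def[symmetric] ratio volfac using Dpos by (simp add: F_def)
  show ?thesis
    using FR sv_bounds[OF p, of T] unfolding d_def by simp
qed


end
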